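(* Let $(V,v)$ be a pair of continuous upper and lower probabilities on $(\Omega,\mathcal{F})$. Let $\mathbf{Y}=\{Y_n\}_{n\in\mathbb{N}}$ be a bounded stochastic process (i.e. $\sup_{n,\omega}|Y_n(\omega)|<\infty$) which is stationary on $(\Omega,\mathcal{F},V)$ and ergodic. Then there exists a constant $c$ such that $$v\Big(\Big\{\omega\in\Omega:\ \lim_{n\to\infty}\frac1n\sum_{k=1}^{n}Y_k(\omega)=c\Big\}\Big)=1.$$ If moreover $V$ is concave (equivalently $v$ is convex), then $c\in\left[\int_{\Omega}Y_1\, dv,\int_{\Omega}Y_1\, dV\right]$.
   Context: For a nonempty set $\mathcal{P}$ of finitely additive probabilities on $\mathcal{F}$, $V(A)=\sup_{P\in\mathcal{P}}P(A)$ and $v(A)=\inf_{P\in\mathcal{P}}P(A)$; continuity means $V(A_n)\to V(A)$ whenever $A_n\uparrow A$ or $A_n\downarrow A$ (and likewise for $v$). $V$ is concave if $V(A\cup B)+V(A\cap B)\le V(A)+V(B)$; $v$ is convex if the reverse inequality holds. $\mathbf{Y}$ is stationary on $(\Omega,\mathcal{F},V)$ if for all $n\in\mathbb{N}$, $k\in\mathbb{N}_0$ and Borel $A\subseteq\mathbb{R}^{k+1}$, $V(\{(Y_n,\dots,Y_{n+k})\in A\})=V(\{(Y_{n+1},\dots,Y_{n+1+k})\in A\})$. Let $\mathbb{R}^{\mathbb{N}}$ carry the $\sigma$-algebra $\sigma(\mathcal{C})$ generated by cylinders $\{\mathbf{x}:(x_1,\dots,x_n)\in H\}$, $H\in\mathcal{B}(\mathbb{R}^n)$;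 let $\tau(x_1,x_2,\dots)=(x_2,x_3,\dots)$ be the shift and $V_{\mathbf{Y}}(C)=V(\mathbf{Y}^{-1}(C))$ for $C\in\sigma(\mathcal{C})$, where $\mathbf{Y}(\omega)=(Y_1(\omega),Y_2(\omega),\dots)$. $\mathbf{Y}$ is ergodic if $\tau$ is ergodic with respect to $V_{\mathbf{Y}}$, meaning $\tau$ preserves $V_{\mathbf{Y}}$ and for every $B\in\sigma(\mathcal{C})$ with $\tau^{-1}B=B$: $V_{\mathbf{Y}}(B)\in\{0,1\}$ and ($V_{\mathbf{Y}}(B)=0$ or $V_{\mathbf{Y}}(B^c)=0$). Choquet integral: $\int_{\Omega}\xi\, d\mu=\int_{0}^{\infty}\mu(\{\xi\ge t\})\,dt+\int_{-\infty}^0[\mu(\{\xi\ge t\})-1]\,dt$. *)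

theory Defs
  imports "HOL-Analysis.Analysis"
begin

text \<open>The sample space Omega is the universe of the type 'a; F is a sigma-algebra on it.\<close>

definition fa_prob :: "'a set set \<Rightarrow> ('a set \<Rightarrow> real) \<Rightarrow> bool" where
  "fa_prob F P \<longleftrightarrow> (\<forall>A\<in>F. 0 \<le> P A) \<and> P UNIV = 1 \<and>
     (\<forall>A\<in>F. \<forall>B\<in>F. A \<inter> B = {} \<longrightarrow> P (A \<union> B) = P A + P B)"

definition upper_prob :: "('a set \<Rightarrow> real) set \<Rightarrow> 'a set \<Rightarrow> real" where
  "upper_prob \<P> A = (SUP P\<in>\<P>. P A)"

definition lower_prob :: "('a set \<Rightarrow> real) set \<Rightarrow> 'a set \<Rightarrow> real" where
  "lower_prob \<P> A = (INF P\<in>\<P>. P A)"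

definition continuous_cap :: "'a set set \<Rightarrow> ('a set \<Rightarrow> real) \<Rightarrow> bool" where
  "continuous_cap F \<mu> \<longleftrightarrow>
     (\<forall>A. (\<forall>n. A n \<in> F) \<longrightarrow> incseq A \<longrightarrow> (\<lambda>n. \<mu> (A n)) \<longlonglongrightarrow> \<mu> (\<Union>n. A n)) \<and>
     (\<forall>A. (\<forall>n. A n \<in> F) \<longrightarrow> decseq A \<longrightarrow> (\<lambda>n. \<mu> (A n)) \<longlonglongrightarrow> \<mu> (\<Inter>n. A n))"

definition concave_cap :: "'a set set \<Rightarrow> ('a set \<Rightarrow> real) \<Rightarrow> bool" where
  "concave_cap F \<mu> \<longleftrightarrow> (\<forall>A\<in>F. \<forall>B\<in>F. \<mu> (A \<union> B) + \<mu> (A \<inter> B) \<le> \<mu> A + \<mu> B)"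

definition random_var :: "'a set set \<Rightarrow> ('a \<Rightarrow> real) \<Rightarrow> bool" where
  "random_var F X \<longleftrightarrow> (\<forall>B\<in>sets borel. X -` B \<in> F)"

text \<open>The process is Y 1, Y 2, ... (the value Y 0 plays no role).
  Stationarity: (Y_n,...,Y_{n+k}) is encoded as the function on {0..k}, with
  the Borel sets of R^{k+1} being the product sigma-algebra on {..k} -> real.\<close>

definition stationary :: "('a set \<Rightarrow> real) \<Rightarrow> (nat \<Rightarrow> 'a \<Rightarrow> real) \<Rightarrow> bool" where
  "stationary V Y \<longleftrightarrow> (\<forall>n\<ge>1. \<forall>k::nat. \<forall>A\<in>sets (PiM {..k} (\<lambda>_. borel)).
     V {\<omega>. (\<lambda>i\<in>{..k}. Y (n + i) \<omega>) \<in> A} = V {\<omega>. (\<lambda>i\<in>{..k}. Y (n + 1 + i) \<omega>) \<in> A})"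

text \<open>Sequence space R^N, coordinates 0-based: x 0 is x_1 of the paper.\<close>

definition cylinder_sigma :: "(nat \<Rightarrow> real) set set" where
  "cylinder_sigma = sigma_sets UNIV
     {{x. (\<lambda>i\<in>{..<n}. x i) \<in> H} | n H. 1 \<le> n \<and> H \<in> sets (PiM {..<n} (\<lambda>_. borel))}"

definition shift :: "(nat \<Rightarrow> real) \<Rightarrow> (nat \<Rightarrow> real)" where
  "shift x = (\<lambda>i. x (Suc i))"

definition seq_of :: "(nat \<Rightarrow> 'a \<Rightarrow> real) \<Rightarrow> 'a \<Rightarrow> (nat \<Rightarrow> real)" where
  "seq_of Y \<omega> = (\<lambda>i. Y (Suc i) \<omega>)"

definition dist_cap :: "('a set \<Rightarrow> real) \<Rightarrow> (nat \<Rightarrow> 'a \<Rightarrow> real) \<Rightarrow> (nat \<Rightarrow> real) set \<Rightarrow> real" where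
  "dist_cap V Y C = V (seq_of Y -` C)"

definition ergodic :: "('a set \<Rightarrow> real) \<Rightarrow> (nat \<Rightarrow> 'a \<Rightarrow> real) \<Rightarrow> bool" where
  "ergodic V Y \<longleftrightarrow>
     (\<forall>C\<in>cylinder_sigma. dist_cap V Y (shift -` C) = dist_cap V Y C) \<and>
     (\<forall>B\<in>cylinder_sigma. shift -` B = B \<longrightarrow>
        (dist_cap V Y B = 0 \<or> dist_cap V Y B = 1) \<and>
        (dist_cap V Y B = 0 \<or> dist_cap V Y (- B) = 0))"

definition choquet :: "('a set \<Rightarrow> real) \<Rightarrow> ('a \<Rightarrow> real) \<Rightarrow> real" where
  "choquet \<mu> \<xi> = (LINT t:{0..}|lborel. \<mu> {\<omega>. \<xi> \<omega> \<ge> t})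
                 + (LINT t:{..0}|lborel. \<mu> {\<omega>. \<xi> \<omega> \<ge> t} - 1)"

end

theory Submission
  imports Defs
begin

lemma tiling:
  fixes z b :: "nat \<Rightarrow> real" and C :: real and N :: nat
  assumes C: "0 \<le> C" and zC: "\<And>k. - C \<le> z k"
    and b01: "\<And>i. b i = 0 \<or> b i = 1"
    and good: "\<And>i. b i = 0 \<Longrightarrow> \<exists>n\<in>{1..N}. 0 \<le> (\<Sum>k\<in>{i..<i+n}. z k)"
  shows "- C * (\<Sum>i\<in>{j..<K}. b i) - C * real N \<le> (\<Sum>k\<in>{j..<K}. z k)"
proof (induction "K - j" arbitrary: j rule: less_induct)
  case less
  show ?case
  proof (cases "K \<le> j")
    case True then show ?thesis using C by simp
  next
    case False
    then have jK: "j < K" by simp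
    have split: "(\<Sum>k\<in>{j..<K}. f k) = (\<Sum>k\<in>{j..<m}. f k) + (\<Sum>k\<in>{m..<K}. f k)"
      if "j \<le> m" "m \<le> K" for f :: "nat \<Rightarrow> real" and m
      using that by (simp add: sum.atLeastLessThan_concat)
    have bnn: "0 \<le> (\<Sum>i\<in>A. b i)" for A using b01 by (intro sum_nonneg) (metis order_refl zero_le_one)
    show ?thesis
    proof (cases "b j = 0")
      case True
      then obtain n where n: "n \<in> {1..N}" "0 \<le> (\<Sum>k\<in>{j..<j+n}. z k)" using good by blast
      show ?thesis
      proof (cases "j + n \<le> K")
        case True
        have IH: "- C * (\<Sum>i\<in>{j+n..<K}. b i) - C * real N \<le> (\<Sum>k\<in>{j+n..<K}. z k)"
          using less[of "j + n"] n jK by auto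
        have "(\<Sum>i\<in>{j+n..<K}. b i) \<le> (\<Sum>i\<in>{j..<K}. b i)"
          using split[of "j+n" b] True bnn[of "{j..<j+n}"] by simp
        then have "- C * (\<Sum>i\<in>{j..<K}. b i) \<le> - C * (\<Sum>i\<in>{j+n..<K}. b i)"
          using C by (simp add: mult_left_mono)
        then show ?thesis using IH n(2) split[of "j+n" z] True by simp
      next
        case False
        have "(\<Sum>k\<in>{j..<K}. - C) \<le> (\<Sum>k\<in>{j..<K}. z k)" using zC by (rule sum_mono)
        moreover have "(\<Sum>k\<in>{j..<K}. - C) = - C * real (K - j)" by simp
        moreover have "real (K - j) \<le> real N" using False n(1) by auto
        moreover have "0 \<le> C * (\<Sum>i\<in>{j..<K}. b i)" using C bnn by simp
        moreover have "C * real (K - j) \<le> C * real N" using C \<open>real (K - j) \<le> real N\<close> by (intro mult_left_mono)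
        ultimately show ?thesis by (simp add: mult.commute)
      qed
    next
      case False
      then have bj: "b j = 1" using b01 by metis
      have IH: "- C * (\<Sum>i\<in>{Suc j..<K}. b i) - C * real N \<le> (\<Sum>k\<in>{Suc j..<K}. z k)"
        using less[of "Suc j"] jK by auto
      have "(\<Sum>i\<in>{j..<K}. b i) = b j + (\<Sum>i\<in>{Suc j..<K}. b i)"
        using jK by (simp add: sum.atLeast_Suc_lessThan)
      moreover have "(\<Sum>i\<in>{j..<K}. z i) = z j + (\<Sum>i\<in>{Suc j..<K}. z i)"
        using jK by (simp add: sum.atLeast_Suc_lessThan)
      ultimately show ?thesis using IH bj zC[of j] by (simp add: algebra_simps)
    qed
  qed
qed


lemma sum_shift_ivl:
  fixes f :: "nat \<Rightarrow> real" and i n :: nat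
  shows "(\<Sum>k\<in>{i..<i+n}. f k) = (\<Sum>t<n. f (i + t))"
  by (induction n) (auto simp: sum.atLeastLessThan_Suc)

lemma conv_iff:
  fixes S :: "nat \<Rightarrow> real" and c :: real
  shows "(\<lambda>n. S n / real n) \<longlonglongrightarrow> c \<longleftrightarrow>
    (\<forall>\<delta>>0. eventually (\<lambda>n. S n \<le> real n * (c + \<delta>)) sequentially) \<and>
    (\<forall>\<delta>>0. eventually (\<lambda>n. - S n \<le> real n * (- c + \<delta>)) sequentially)"
proof
  assume L: "(\<lambda>n. S n / real n) \<longlonglongrightarrow> c"
  have A: "eventually (\<lambda>n. S n \<le> real n * (c + \<delta>) \<and> - S n \<le> real n * (- c + \<delta>)) sequentially"
    if d: "0 < \<delta>" for \<delta>
  proof -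
    have "eventually (\<lambda>n. dist (S n / real n) c < \<delta>) sequentially"
      using L d by (simp add: tendsto_iff)
    then show ?thesis using eventually_gt_at_top[of "0::nat"]
    proof eventually_elim
      case (elim n)
      then have "\<bar>S n / real n - c\<bar> < \<delta>" by (simp add: dist_real_def)
      then have "S n / real n \<le> c + \<delta>" "- (S n / real n) \<le> - c + \<delta>" by auto
      then show ?case using elim(2) by (simp add: divide_le_eq field_simps del: minus_divide_left)
    qed
  qed
  then show "(\<forall>\<delta>>0. eventually (\<lambda>n. S n \<le> real n * (c + \<delta>)) sequentially) \<and>
    (\<forall>\<delta>>0. eventually (\<lambda>n. - S n \<le> real n * (- c + \<delta>)) sequentially)"
  proof (intro conjI allI impI)
    fix \<delta> :: real assume "0 < \<delta>"
    from A[OF this] show "eventually (\<lambda>n. S n \<le> real n * (c + \<delta>)) sequentially"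
      by (rule eventually_mono) simp
    from A[OF \<open>0 < \<delta>\<close>] show "eventually (\<lambda>n. - S n \<le> real n * (- c + \<delta>)) sequentially"
      by (rule eventually_mono) simp
  qed
next
  assume H: "(\<forall>\<delta>>0. eventually (\<lambda>n. S n \<le> real n * (c + \<delta>)) sequentially) \<and>
    (\<forall>\<delta>>0. eventually (\<lambda>n. - S n \<le> real n * (- c + \<delta>)) sequentially)"
  show "(\<lambda>n. S n / real n) \<longlonglongrightarrow> c" unfolding tendsto_iff
  proof (intro allI impI)
    fix e :: real assume e: "0 < e"
    then have e2: "0 < e/2" by simp
    have "eventually (\<lambda>n. S n \<le> real n * (c + e/2)) sequentially"
      "eventually (\<lambda>n. - S n \<le> real n * (- c + e/2)) sequentially" using H e2 by blast+
    then show "eventually (\<lambda>n. dist (S n / real n) c < e) sequentially"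
      using eventually_gt_at_top[of "0::nat"]
    proof eventually_elim
      case (elim n)
      then have n: "0 < real n" by simp
      have "S n / real n \<le> c + e/2" using elim(1) n by (simp add: divide_le_eq mult.commute)
      moreover have "(- S n) / real n \<le> - c + e/2" using elim(2) n by (subst divide_le_eq) (simp add: mult.commute)
      ultimately have "\<bar>S n / real n - c\<bar> \<le> e/2" unfolding abs_le_iff by linarith
      then show ?case using e by (simp add: dist_real_def)
    qed
  qed
qed

lemma sum_if_card:
  fixes A :: "nat set" assumes "finite A"
  shows "(\<Sum>i\<in>A. if P i then 1 else 0 :: real) = real (card {i\<in>A. P i})"
proof -
  have "(\<Sum>i\<in>A. if P i then 1 else 0 :: real) = (\<Sum>i\<in>{i\<in>A. P i}. 1)"
    using assms by (simp add: sum.If_cases Int_def)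
  then show ?thesis by simp
qed

lemma grid_lo:
  fixes a y h :: real and m :: nat
  assumes h: "0 < h" and ay: "a \<le> y"
  shows "a + h * (\<Sum>i<m. if a + real i * h \<le> y then 1 else 0) \<le> y + h"
proof -
  define p where "p = nat \<lfloor>(y - a) / h\<rfloor>"
  have yp: "real p \<le> (y - a) / h" unfolding p_def using ay h by simp
  have sub: "{i\<in>{..<m}. a + real i * h \<le> y} \<subseteq> {..p}"
  proof
    fix i assume "i \<in> {i\<in>{..<m}. a + real i * h \<le> y}"
    then have "real i \<le> (y - a) / h" using h by (simp add: le_divide_eq)
    then have "int i \<le> \<lfloor>(y - a) / h\<rfloor>" by (simp add: le_floor_iff)
    then show "i \<in> {..p}" unfolding p_def by simp
  qed
  have "card {i\<in>{..<m}. a + real i * h \<le> y} \<le> card {..p}" using sub by (intro card_mono) auto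
  then have c: "real (card {i\<in>{..<m}. a + real i * h \<le> y}) \<le> real p + 1" by simp
  have "a + h * (\<Sum>i<m. if a + real i * h \<le> y then 1 else 0) = a + h * real (card {i\<in>{..<m}. a + real i * h \<le> y})"
    by (simp add: sum_if_card)
  also have "\<dots> \<le> a + h * (real p + 1)" using c h by (intro add_left_mono mult_left_mono) auto
  also have "\<dots> \<le> a + h * ((y - a) / h + 1)" using yp h by (intro add_left_mono mult_left_mono) auto
  also have "\<dots> = y + h" using h by (simp add: field_simps)
  finally show ?thesis .
qed

lemma grid_up:
  fixes a y h :: real and m :: nat
  assumes h: "0 < h" and ay: "a \<le> y" and ym: "y \<le> a + real m * h"
  shows "y \<le> a + h + h * (\<Sum>i\<in>{1..m}. if a + real i * h \<le> y then 1 else 0)"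
proof -
  define p where "p = nat \<lfloor>(y - a) / h\<rfloor>"
  have yp: "(y - a) / h < real p + 1" unfolding p_def using ay h by linarith
  have pfl: "real p \<le> (y - a) / h" unfolding p_def using ay h by simp
  have sub: "{1..p} \<subseteq> {i\<in>{1..m}. a + real i * h \<le> y}"
  proof
    fix i assume i: "i \<in> {1..p}"
    then have "real i \<le> (y - a) / h" using pfl by auto
    then have "a + real i * h \<le> y" using h by (simp add: le_divide_eq)
    moreover have "(y - a) / h \<le> real m" using ym h by (simp add: divide_le_eq)
    then have "i \<le> m" using i pfl by auto
    ultimately show "i \<in> {i\<in>{1..m}. a + real i * h \<le> y}" using i by auto
  qed
  have "card {1..p} \<le> card {i\<in>{1..m}. a + real i * h \<le> y}" using sub by (intro card_mono) auto
  then have c: "real p \<le> real (card {i\<in>{1..m}. a + real i * h \<le> y})" by simp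
  have "y = a + h * ((y - a) / h)" using h by (simp add: field_simps)
  also have "\<dots> \<le> a + h * (real p + 1)" using yp h by (intro add_left_mono mult_left_mono) auto
  also have "\<dots> = a + h + h * real p" by (simp add: algebra_simps)
  also have "\<dots> \<le> a + h + h * real (card {i\<in>{1..m}. a + real i * h \<le> y})"
    using c h by (intro add_left_mono mult_left_mono) auto
  also have "\<dots> = a + h + h * (\<Sum>i\<in>{1..m}. if a + real i * h \<le> y then 1 else 0)"
    by (simp add: sum_if_card)
  finally show ?thesis .
qed

lemma antimono_integrable:
  fixes f :: "real \<Rightarrow> real"
  assumes anti: "\<And>x y. x \<le> y \<Longrightarrow> f y \<le> f x"
  shows "f integrable_on {u..w}"
proof -
  have "mono_on {u..w} (\<lambda>x. - f x)" unfolding mono_on_def using anti by auto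
  then have "(\<lambda>x. - f x) integrable_on {u..w}" by (rule integrable_on_mono_on)
  then have "(\<lambda>x. - (- f x)) integrable_on {u..w}" by (rule integrable_neg)
  then show ?thesis by simp
qed

lemma riemann:
  fixes f :: "real \<Rightarrow> real" and a h :: real and m :: nat
  assumes anti: "\<And>x y. x \<le> y \<Longrightarrow> f y \<le> f x" and h: "0 < h"
  shows "h * (\<Sum>i\<in>{1..m}. f (a + real i * h)) \<le> integral {a..a + real m * h} f \<and>
         integral {a..a + real m * h} f \<le> h * (\<Sum>i<m. f (a + real i * h))"
proof (induction m)
  case 0 then show ?case by simp
next
  case (Suc m)
  define x where "x = a + real m * h"
  have xs: "a + real (Suc m) * h = x + h" unfolding x_def by (simp add: algebra_simps)
  have comb: "integral {a..x} f + integral {x..x+h} f = integral {a..x+h} f"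
  proof (rule Henstock_Kurzweil_Integration.integral_combine)
    show "a \<le> x" using h unfolding x_def by simp
    show "x \<le> x + h" using h by simp
    show "f integrable_on {a..x+h}" by (rule antimono_integrable[OF anti])
  qed
  have lo: "h * f (x + h) \<le> integral {x..x+h} f"
  proof -
    have "integral {x..x+h} (\<lambda>t. f (x + h)) \<le> integral {x..x+h} f"
      by (intro integral_le antimono_integrable[OF anti] integrable_const_ivl) (auto intro: anti)
    then show ?thesis using h by (simp add: content_real)
  qed
  have up: "integral {x..x+h} f \<le> h * f x"
  proof -
    have "integral {x..x+h} f \<le> integral {x..x+h} (\<lambda>t. f x)"
      by (intro integral_le antimono_integrable[OF anti] integrable_const_ivl) (auto intro: anti)
    then show ?thesis using h by (simp add: content_real)
  qed
  have s1: "(\<Sum>i\<in>{1..Suc m}. f (a + real i * h)) = (\<Sum>i\<in>{1..m}. f (a + real i * h)) + f (x + h)"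
    using xs by simp
  have s2: "(\<Sum>i<Suc m. f (a + real i * h)) = (\<Sum>i<m. f (a + real i * h)) + f x"
    unfolding x_def by simp
  show ?case unfolding xs s1 s2 comb[symmetric] using Suc lo up unfolding x_def
    by (simp add: distrib_left)
qed


lemma set_integrable_bdd:
  fixes f :: "real \<Rightarrow> real"
  assumes fm: "f \<in> borel_measurable borel" and b: "\<And>t. \<bar>f t\<bar> \<le> 1"
  shows "set_integrable lborel {u..w} f"
  unfolding set_integrable_def
proof (rule integrableI_bounded_set[where A="{u..w}" and B=1])
  show "{u..w} \<in> sets lborel" by simp
  show "(\<lambda>x. indicator {u..w} x *\<^sub>R f x) \<in> borel_measurable lborel" using fm by simp
  show "emeasure lborel {u..w} < \<infinity>" by (rule emeasure_bounded_finite) simp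
  show "AE x in lborel. x \<in> {u..w} \<longrightarrow> norm (indicator {u..w} x *\<^sub>R f x) \<le> 1"
    using b by (auto simp: indicator_def)
  show "AE x in lborel. x \<notin> {u..w} \<longrightarrow> indicator {u..w} x *\<^sub>R f x = 0" by simp
qed

lemma choquet_conv:
  fixes f :: "real \<Rightarrow> real" and M :: real
  assumes M: "0 < M" and anti: "\<And>x y. x \<le> y \<Longrightarrow> f y \<le> f x"
    and f01: "\<And>t. 0 \<le> f t \<and> f t \<le> 1"
    and low: "\<And>t. t \<le> - M \<Longrightarrow> f t = 1" and high: "\<And>t. M < t \<Longrightarrow> f t = 0"
  shows "(LINT t:{0..}|lborel. f t) + (LINT t:{..0}|lborel. f t - 1) = integral {-M..M} f - M"
proof -
  have "(\<lambda>x. - f x) \<in> borel_measurable borel"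
    by (rule borel_measurable_mono) (auto simp: mono_def anti)
  from borel_measurable_uminus[OF this] have fm: "f \<in> borel_measurable borel" by simp
  have fm1: "(\<lambda>t. f t - 1) \<in> borel_measurable borel" using fm by simp
  have A: "(LINT t:{0..}|lborel. f t) = (LINT t:{0..M}|lborel. f t)"
    unfolding set_lebesgue_integral_def
    by (rule Bochner_Integration.integral_cong) (auto simp: indicator_def high not_le)
  have B: "(LINT t:{0..M}|lborel. f t) = integral {0..M} f"
    by (rule set_borel_integral_eq_integral(2)[OF set_integrable_bdd[OF fm]]) (use f01 in \<open>auto simp: abs_le_iff\<close>)
  have C: "(LINT t:{..0}|lborel. f t - 1) = (LINT t:{-M..0}|lborel. f t - 1)"
    unfolding set_lebesgue_integral_def
    by (rule Bochner_Integration.integral_cong) (auto simp: indicator_def low not_le)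
  have D: "(LINT t:{-M..0}|lborel. f t - 1) = integral {-M..0} (\<lambda>t. f t - 1)"
    by (rule set_borel_integral_eq_integral(2)[OF set_integrable_bdd[OF fm1]]) (use f01 in \<open>auto simp: abs_le_iff\<close>)
  have E: "integral {-M..0} (\<lambda>t. f t - 1) = integral {-M..0} f - M"
    using M by (subst Henstock_Kurzweil_Integration.integral_diff) (auto intro: antimono_integrable[OF anti] simp: content_real)
  have G: "integral {-M..0} f + integral {0..M} f = integral {-M..M} f"
    using M by (intro Henstock_Kurzweil_Integration.integral_combine antimono_integrable[OF anti]) auto
  show ?thesis using A B C D E G by simp
qed


locale setting =
  fixes F :: "'a set set" and PP :: "('a set \<Rightarrow> real) set" and Y :: "nat \<Rightarrow> 'a \<Rightarrow> real" and M :: real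
  assumes sa: "sigma_algebra UNIV F"
    and ne: "PP \<noteq> {}"
    and fa: "\<forall>P\<in>PP. fa_prob F P"
    and contV: "continuous_cap F (upper_prob PP)"
    and rv: "\<forall>n\<ge>1. random_var F (Y n)"
    and bnd: "\<forall>n\<ge>1. \<forall>\<omega>. \<bar>Y n \<omega>\<bar> \<le> M"
    and stat: "stationary (upper_prob PP) Y"
    and erg: "ergodic (upper_prob PP) Y"
    and Mpos: "0 < M"

sublocale setting \<subseteq> S: sigma_algebra UNIV F by (rule sa)

context setting
begin

abbreviation "V \<equiv> upper_prob PP"
abbreviation "v \<equiv> lower_prob PP"

definition "Mf = sigma (UNIV::'a set) F"

lemma sets_Mf[simp]: "sets Mf = F"
  unfolding Mf_def using sa by (simp add: sigma_algebra.sigma_sets_eq)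

lemma space_Mf[simp]: "space Mf = UNIV"
  unfolding Mf_def by simp

lemma F_compl[intro]: "A \<in> F \<Longrightarrow> - A \<in> F"
  using S.compl_sets by (simp add: Compl_eq_Diff_UNIV)
lemma F_Un[intro]: "A \<in> F \<Longrightarrow> B \<in> F \<Longrightarrow> A \<union> B \<in> F"
  using S.Un by simp
lemma F_Int[intro]: "A \<in> F \<Longrightarrow> B \<in> F \<Longrightarrow> A \<inter> B \<in> F"
  using S.Int by simp
lemma F_Diff[intro]: "A \<in> F \<Longrightarrow> B \<in> F \<Longrightarrow> A - B \<in> F"
  using S.Diff by simp
lemma F_empty[intro,simp]: "{} \<in> F"
  using S.empty_sets by simp
lemma F_UNIV[intro,simp]: "UNIV \<in> F"
  using S.top by simp
lemma F_UN[intro]: "(\<And>n::nat. A n \<in> F) \<Longrightarrow> (\<Union>n. A n) \<in> F"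
  using S.countable_UN[of A UNIV] by auto
lemma F_INT[intro]: "(\<And>n::nat. A n \<in> F) \<Longrightarrow> (\<Inter>n. A n) \<in> F"
  using S.countable_INT[of A UNIV] by auto

lemma Y_meas[measurable]: "n \<ge> 1 \<Longrightarrow> Y n \<in> borel_measurable Mf"
  using rv unfolding random_var_def by (auto simp: measurable_def)

lemma Y_meas'[measurable]: "Y (Suc n) \<in> borel_measurable Mf"
  using Y_meas[of "Suc n"] by simp

lemma M_nonneg: "0 \<le> M"
  using bnd by (meson abs_ge_zero order_trans order_refl le_numeral_extra(4))

context fixes P assumes P: "P \<in> PP"
begin
lemma P_fa: "fa_prob F P" using fa P by auto
lemma P_nonneg: "A \<in> F \<Longrightarrow> 0 \<le> P A" using P_fa unfolding fa_prob_def by auto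
lemma P_UNIV: "P UNIV = 1" using P_fa unfolding fa_prob_def by auto
lemma P_add: "A \<in> F \<Longrightarrow> B \<in> F \<Longrightarrow> A \<inter> B = {} \<Longrightarrow> P (A \<union> B) = P A + P B"
  using P_fa unfolding fa_prob_def by auto
lemma P_empty: "P {} = 0" using P_add[of "{}" "{}"] by simp
lemma P_mono: "A \<in> F \<Longrightarrow> B \<in> F \<Longrightarrow> A \<subseteq> B \<Longrightarrow> P A \<le> P B"
  using P_add[of A "B - A"] P_nonneg[of "B - A"] F_Diff[of B A] by (auto simp: Un_absorb1 Un_Diff_cancel)
lemma P_le1: "A \<in> F \<Longrightarrow> P A \<le> 1" using P_mono[of A UNIV] P_UNIV by auto
lemma P_compl: "A \<in> F \<Longrightarrow> P (- A) = 1 - P A"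
  using P_add[of A "- A"] P_UNIV F_compl[of A] by auto
lemma P_Un_le: "A \<in> F \<Longrightarrow> B \<in> F \<Longrightarrow> P (A \<union> B) \<le> P A + P B"
  using P_add[of A "B - A"] P_mono[of "B - A" B] F_Diff[of B A] by auto
end

lemma bddV: "A \<in> F \<Longrightarrow> bdd_above ((\<lambda>P. P A) ` PP)"
  using P_le1 by (auto intro!: bdd_aboveI)
lemma bddv: "A \<in> F \<Longrightarrow> bdd_below ((\<lambda>P. P A) ` PP)"
  using P_nonneg by (auto intro!: bdd_belowI)

lemma P_le_V: "P \<in> PP \<Longrightarrow> A \<in> F \<Longrightarrow> P A \<le> V A"
  unfolding upper_prob_def using bddV by (auto intro: cSUP_upper)
lemma V_least: "(\<And>P. P \<in> PP \<Longrightarrow> P A \<le> c) \<Longrightarrow> V A \<le> c"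
  unfolding upper_prob_def using ne by (auto intro: cSUP_least)
lemma v_le_P: "P \<in> PP \<Longrightarrow> A \<in> F \<Longrightarrow> v A \<le> P A"
  unfolding lower_prob_def using bddv by (auto intro: cINF_lower)
lemma v_greatest: "(\<And>P. P \<in> PP \<Longrightarrow> c \<le> P A) \<Longrightarrow> c \<le> v A"
  unfolding lower_prob_def using ne by (auto intro: cINF_greatest)

lemma exP: obtains P where "P \<in> PP" using ne by auto

lemma V_nonneg: "A \<in> F \<Longrightarrow> 0 \<le> V A"
  by (metis exP P_le_V P_nonneg order_trans)
lemma V_le1: "V A \<le> 1" if "A \<in> F" using that P_le1 by (auto intro: V_least)
lemma V_empty[simp]: "V {} = 0"
  by (intro antisym V_least) (auto simp: P_empty V_nonneg)
lemma V_UNIV[simp]: "V UNIV = 1"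
  by (metis exP P_UNIV P_le_V F_UNIV V_le1 antisym)
lemma V_mono: "A \<in> F \<Longrightarrow> B \<in> F \<Longrightarrow> A \<subseteq> B \<Longrightarrow> V A \<le> V B"
  by (rule V_least) (meson P_le_V P_mono order_trans)
lemma V_Un_le: "A \<in> F \<Longrightarrow> B \<in> F \<Longrightarrow> V (A \<union> B) \<le> V A + V B"
  by (rule V_least) (smt (verit) P_Un_le P_le_V)
lemma v_eq: "A \<in> F \<Longrightarrow> v A = 1 - V (- A)"
proof (rule antisym)
  assume A: "A \<in> F"
  show "1 - V (- A) \<le> v A"
    by (rule v_greatest) (smt (verit, best) A F_compl P_compl P_le_V double_complement)
  show "v A \<le> 1 - V (- A)"
  proof -
    have "V (- A) \<le> 1 - v A"
      by (rule V_least) (smt (verit) A P_compl v_le_P)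
    then show ?thesis by simp
  qed
qed

lemma V_null_UN:
  fixes A :: "nat \<Rightarrow> 'a set"
  assumes "\<And>n. A n \<in> F" "\<And>n. V (A n) = 0"
  shows "V (\<Union>n. A n) = 0"
proof -
  define B where "B n = (\<Union>i\<le>n. A i)" for n
  have BF: "B n \<in> F" for n
  proof (induction n)
    case 0 then show ?case using assms by (simp add: B_def)
  next
    case (Suc n)
    have "B (Suc n) = B n \<union> A (Suc n)" by (auto simp: B_def atMost_Suc)
    then show ?case using Suc assms by auto
  qed
  have B0: "V (B n) = 0" for n
  proof (induction n)
    case 0 then show ?case using assms by (simp add: B_def)
  next
    case (Suc n)
    have "B (Suc n) = B n \<union> A (Suc n)" by (auto simp: B_def atMost_Suc)
    then have "V (B (Suc n)) \<le> V (B n) + V (A (Suc n))" using V_Un_le[of "B n" "A (Suc n)"] BF assms(1) by simp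
    then show ?case using Suc assms(2)[of "Suc n"] V_nonneg[OF BF[of "Suc n"]] by linarith
  qed
  have "incseq B" by (rule incseq_SucI) (auto simp: B_def atMost_Suc)
  then have "(\<lambda>n. V (B n)) \<longlonglongrightarrow> V (\<Union>n. B n)"
    using contV BF unfolding continuous_cap_def by auto
  moreover have "(\<Union>n. B n) = (\<Union>n. A n)" by (auto simp: B_def)
  moreover have "(\<lambda>n. V (B n)) = (\<lambda>_. 0)" using B0 by auto
  ultimately show ?thesis using LIMSEQ_unique[OF _ tendsto_const[of 0]] by metis
qed

lemma V_dec:
  fixes A :: "nat \<Rightarrow> 'a set"
  assumes "\<And>n. A n \<in> F" "decseq A"
  shows "(\<lambda>n. V (A n)) \<longlonglongrightarrow> V (\<Inter>n. A n)"
  using contV assms unfolding continuous_cap_def by auto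


subsection \<open>Sequence space\<close>

definition "cyl = {{x::nat\<Rightarrow>real. (\<lambda>i\<in>{..<n}. x i) \<in> H} | n H. 1 \<le> n \<and> H \<in> sets (PiM {..<n} (\<lambda>_. borel))}"
definition "Mc = sigma (UNIV :: (nat \<Rightarrow> real) set) cyl"

lemma sets_Mc: "sets Mc = cylinder_sigma"
  unfolding Mc_def cylinder_sigma_def cyl_def by (subst sets_measure_of) auto

lemma space_Mc[simp]: "space Mc = UNIV"
  unfolding Mc_def by simp

lemma coord_meas[measurable]: "(\<lambda>x. x i) \<in> borel_measurable Mc"
proof (rule measurableI)
  fix A :: "real set" assume A: "A \<in> sets borel"
  define H where "H = (\<lambda>z. z i) -` A \<inter> space (PiM {..<Suc i} (\<lambda>_. borel :: real measure))"
  have "H \<in> sets (PiM {..<Suc i} (\<lambda>_. borel))"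
    unfolding H_def by (rule measurable_sets[OF measurable_component_singleton[of i "{..<Suc i}" "\<lambda>_. borel"]]) (auto simp: A)
  moreover have "{x::nat\<Rightarrow>real. (\<lambda>j\<in>{..<Suc i}. x j) \<in> H} = (\<lambda>x. x i) -` A \<inter> space Mc"
    unfolding H_def by (auto simp: space_PiM)
  ultimately have "(\<lambda>x. x i) -` A \<inter> space Mc \<in> cyl" unfolding cyl_def
    by (intro CollectI exI[of _ "Suc i"] exI[of _ H] conjI) auto
  then show "(\<lambda>x. x i) -` A \<inter> space Mc \<in> sets Mc"
    unfolding Mc_def by (subst sets_measure_of) (auto simp: cyl_def)
qed simp

definition "U s q = {x::nat\<Rightarrow>real. \<forall>m::nat. \<exists>N::nat. \<forall>n\<ge>N. (\<Sum>k<n. s * x k) \<le> real n * (q + 1 / real (Suc m))}"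

lemma U_sets: "U s q \<in> cylinder_sigma"
proof -
  have "{x \<in> space Mc. \<forall>m::nat. \<exists>N::nat. \<forall>n\<ge>N. (\<Sum>k<n. s * x k) \<le> real n * (q + 1 / real (Suc m))} \<in> sets Mc"
  proof -
    have m1: "(\<lambda>x. \<Sum>k<n. s * x k) \<in> borel_measurable Mc" for n
      by measurable
    have m2: "{x \<in> space Mc. (\<Sum>k<n. s * x k) \<le> c} \<in> sets Mc" for n c
      using m1[of n] by measurable
    show ?thesis
      by (intro sets.sets_Collect_countable_All sets.sets_Collect_countable_Ex sets.sets_Collect_imp
          sets.sets_Collect_const m2)
  qed
  then show ?thesis by (simp add: U_def sets_Mc)
qed


lemma ev_ge: "0 < a \<Longrightarrow> eventually (\<lambda>n. b \<le> real n * a) sequentially"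
proof -
  assume a: "0 < a"
  obtain N :: nat where N: "b / a \<le> real N" using real_arch_simple by blast
  show ?thesis
  proof (rule eventually_sequentiallyI[of N])
    fix n assume "N \<le> n"
    then have "b / a \<le> real n" using N by linarith
    then show "b \<le> real n * a" using a by (simp add: divide_le_eq mult.commute)
  qed
qed

lemma U_iff: "x \<in> U s q \<longleftrightarrow> (\<forall>\<delta>>0. eventually (\<lambda>n. (\<Sum>k<n. s * x k) \<le> real n * (q + \<delta>)) sequentially)"
proof
  assume x: "x \<in> U s q"
  show "\<forall>\<delta>>0. eventually (\<lambda>n. (\<Sum>k<n. s * x k) \<le> real n * (q + \<delta>)) sequentially"
  proof (intro allI impI)
    fix \<delta> :: real assume d: "0 < \<delta>"
    obtain m :: nat where m0: "inverse (real (Suc m)) < \<delta>" using reals_Archimedean[OF d] by blast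
    then have m: "1 / real (Suc m) < \<delta>" by (simp add: inverse_eq_divide)
    from x obtain N where N: "\<forall>n\<ge>N. (\<Sum>k<n. s * x k) \<le> real n * (q + 1 / real (Suc m))"
      unfolding U_def by blast
    show "eventually (\<lambda>n. (\<Sum>k<n. s * x k) \<le> real n * (q + \<delta>)) sequentially"
    proof (rule eventually_sequentiallyI[of N])
      fix n assume "N \<le> n"
      then have "(\<Sum>k<n. s * x k) \<le> real n * (q + 1 / real (Suc m))" using N by auto
      also have "\<dots> \<le> real n * (q + \<delta>)" using m by (intro mult_left_mono) auto
      finally show "(\<Sum>k<n. s * x k) \<le> real n * (q + \<delta>)" .
    qed
  qed
next
  assume H: "\<forall>\<delta>>0. eventually (\<lambda>n. (\<Sum>k<n. s * x k) \<le> real n * (q + \<delta>)) sequentially"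
  show "x \<in> U s q" unfolding U_def
  proof (intro CollectI allI)
    fix m :: nat
    have "eventually (\<lambda>n. (\<Sum>k<n. s * x k) \<le> real n * (q + 1 / real (Suc m))) sequentially"
      using H[rule_format, of "1 / real (Suc m)"] by simp
    then show "\<exists>N. \<forall>n\<ge>N. (\<Sum>k<n. s * x k) \<le> real n * (q + 1 / real (Suc m))"
      unfolding eventually_sequentially .
  qed
qed

lemma sum_shift: "(\<Sum>k<n. s * shift x k) = (\<Sum>k<Suc n. s * x k) - s * x 0"
  unfolding shift_def by (simp only: sum.lessThan_Suc_shift)

lemma shift_U: "shift -` U s q = U s q"
proof (intro set_eqI iffI)
  fix x assume "x \<in> shift -` U s q"
  then have H: "\<forall>\<delta>>0. eventually (\<lambda>n. (\<Sum>k<n. s * shift x k) \<le> real n * (q + \<delta>)) sequentially"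
    using U_iff by auto
  show "x \<in> U s q" unfolding U_iff
  proof (intro allI impI)
    fix \<delta> :: real assume d: "0 < \<delta>"
    have e1: "eventually (\<lambda>n. (\<Sum>k<n. s * shift x k) \<le> real n * (q + \<delta>/2)) sequentially"
      using H d by auto
    have e2: "eventually (\<lambda>n. s * x 0 - q - \<delta> \<le> real n * (\<delta>/2)) sequentially"
      using ev_ge[of "\<delta>/2"] d by (simp del: times_divide_eq_right)
    have "eventually (\<lambda>n. (\<Sum>k<Suc n. s * x k) \<le> real (Suc n) * (q + \<delta>)) sequentially"
      using e1 e2
    proof eventually_elim
      case (elim n)
      have "real (Suc n) * (q + \<delta>) = real n * (q + \<delta>/2) + real n * (\<delta>/2) + q + \<delta>"
        by (simp add: field_simps)
      then show ?case using elim unfolding sum_shift by linarith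
    qed
    then show "eventually (\<lambda>n. (\<Sum>k<n. s * x k) \<le> real n * (q + \<delta>)) sequentially"
      using eventually_sequentially_Suc[of "\<lambda>n. (\<Sum>k<n. s * x k) \<le> real n * (q + \<delta>)"] by simp
  qed
next
  fix x assume "x \<in> U s q"
  then have H: "\<forall>\<delta>>0. eventually (\<lambda>n. (\<Sum>k<n. s * x k) \<le> real n * (q + \<delta>)) sequentially"
    using U_iff by auto
  have "shift x \<in> U s q" unfolding U_iff
  proof (intro allI impI)
    fix \<delta> :: real assume d: "0 < \<delta>"
    have e1: "eventually (\<lambda>n. (\<Sum>k<Suc n. s * x k) \<le> real (Suc n) * (q + \<delta>/2)) sequentially"
      using H d eventually_sequentially_Suc[of "\<lambda>n. (\<Sum>k<n. s * x k) \<le> real n * (q + \<delta>/2)"] by auto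
    have e2: "eventually (\<lambda>n. q + \<delta>/2 - s * x 0 \<le> real n * (\<delta>/2)) sequentially"
      using ev_ge[of "\<delta>/2"] d by (simp del: times_divide_eq_right)
    show "eventually (\<lambda>n. (\<Sum>k<n. s * shift x k) \<le> real n * (q + \<delta>)) sequentially"
      using e1 e2
    proof eventually_elim
      case (elim n)
      have "real (Suc n) * (q + \<delta>/2) = real n * (q + \<delta>) - real n * (\<delta>/2) + q + \<delta>/2"
        by (simp add: field_simps)
      then show ?case using elim unfolding sum_shift by linarith
    qed
  qed
  then show "x \<in> shift -` U s q" by simp
qed


lemma seq_pre: "B \<in> cylinder_sigma \<Longrightarrow> seq_of Y -` B \<in> F"
proof -
  assume B: "B \<in> cylinder_sigma"
  have "seq_of Y \<in> Mf \<rightarrow>\<^sub>M Mc"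
    unfolding Mc_def
  proof (rule measurable_measure_of)
    show "cyl \<subseteq> Pow UNIV" by simp
    show "seq_of Y \<in> space Mf \<rightarrow> UNIV" by simp
    fix y assume "y \<in> cyl"
    then obtain n H where y: "y = {x. (\<lambda>i\<in>{..<n}. x i) \<in> H}" and H: "H \<in> sets (PiM {..<n} (\<lambda>_. borel))"
      unfolding cyl_def by blast
    have m: "(\<lambda>\<omega>. \<lambda>i\<in>{..<n}. Y (Suc i) \<omega>) \<in> Mf \<rightarrow>\<^sub>M PiM {..<n} (\<lambda>_. borel)"
      by (rule measurable_restrict) simp
    have "seq_of Y -` y \<inter> space Mf = (\<lambda>\<omega>. \<lambda>i\<in>{..<n}. Y (Suc i) \<omega>) -` H \<inter> space Mf"
      unfolding y seq_of_def by auto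
    also have "\<dots> \<in> sets Mf" using measurable_sets[OF m H] .
    finally show "seq_of Y -` y \<inter> space Mf \<in> sets Mf" .
  qed
  then have "seq_of Y -` B \<inter> space Mf \<in> sets Mf" using B sets_Mc measurable_sets by blast
  then show ?thesis by simp
qed

definition "EU s q = seq_of Y -` U s q"

lemma EU_F: "EU s q \<in> F" unfolding EU_def using seq_pre U_sets by blast

lemma EU_eq: "EU s q = {\<omega>. \<forall>m::nat. \<exists>N::nat. \<forall>n\<ge>N. (\<Sum>k<n. s * Y (Suc k) \<omega>) \<le> real n * (q + 1 / real (Suc m))}"
  unfolding EU_def U_def seq_of_def by simp

lemma EU_dich: "V (EU s q) = 0 \<or> V (- EU s q) = 0"
proof -
  have "dist_cap V Y (U s q) = 0 \<or> dist_cap V Y (- U s q) = 0"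
  proof -
    have "\<forall>B\<in>cylinder_sigma. shift -` B = B \<longrightarrow>
        (dist_cap V Y B = 0 \<or> dist_cap V Y B = 1) \<and>
        (dist_cap V Y B = 0 \<or> dist_cap V Y (- B) = 0)"
      using erg unfolding ergodic_def by (rule conjunct2)
    then show ?thesis using U_sets[of s q] shift_U[of s q] by simp
  qed
  moreover have "seq_of Y -` (- U s q) = - EU s q" unfolding EU_def by auto
  ultimately show ?thesis unfolding dist_cap_def EU_def by auto
qed

definition "ev j k A = {\<omega>. (\<lambda>i\<in>{..k}. Y (j + 1 + i) \<omega>) \<in> A}"

lemma ev_F: "A \<in> sets (PiM {..k} (\<lambda>_. borel)) \<Longrightarrow> ev j k A \<in> F"
proof -
  assume A: "A \<in> sets (PiM {..k} (\<lambda>_. borel))"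
  have m: "(\<lambda>\<omega>. \<lambda>i\<in>{..k}. Y (j + 1 + i) \<omega>) \<in> Mf \<rightarrow>\<^sub>M PiM {..k} (\<lambda>_. borel)"
    by (rule measurable_restrict) simp
  show ?thesis using measurable_sets[OF m A] unfolding ev_def by (simp add: vimage_def)
qed

lemma V_ev: "A \<in> sets (PiM {..k} (\<lambda>_. borel)) \<Longrightarrow> V (ev j k A) = V (ev 0 k A)"
proof (induction j)
  case 0 then show ?case by simp
next
  case (Suc j)
  have "V {\<omega>. (\<lambda>i\<in>{..k}. Y (Suc j + i) \<omega>) \<in> A} = V {\<omega>. (\<lambda>i\<in>{..k}. Y (Suc j + 1 + i) \<omega>) \<in> A}"
  proof -
    have "\<forall>n\<ge>1. \<forall>k::nat. \<forall>A\<in>sets (PiM {..k} (\<lambda>_. borel)).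
     V {\<omega>. (\<lambda>i\<in>{..k}. Y (n + i) \<omega>) \<in> A} = V {\<omega>. (\<lambda>i\<in>{..k}. Y (n + 1 + i) \<omega>) \<in> A}"
      using stat unfolding stationary_def .
    then have "V {\<omega>. (\<lambda>i\<in>{..k}. Y (Suc j + i) \<omega>) \<in> A} = V {\<omega>. (\<lambda>i\<in>{..k}. Y (Suc j + 1 + i) \<omega>) \<in> A}"
      using Suc.prems by (metis le_add1 plus_1_eq_Suc)
    then show ?thesis by simp
  qed
  then have "V (ev (Suc j) k A) = V (ev j k A)" unfolding ev_def by simp
  then show ?case using Suc by simp
qed


lemma S_bound:
  fixes s :: real and n :: nat and \<omega> :: 'a
  shows "\<bar>s\<bar> \<le> 1 \<Longrightarrow> \<bar>\<Sum>k<n. s * Y (Suc k) \<omega>\<bar> \<le> real n * M"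
proof -
  assume s: "\<bar>s\<bar> \<le> 1"
  have "\<bar>\<Sum>k<n. s * Y (Suc k) \<omega>\<bar> \<le> (\<Sum>k<n. \<bar>s * Y (Suc k) \<omega>\<bar>)" by (rule sum_abs)
  also have "\<dots> \<le> (\<Sum>k<n. M)"
  proof (rule sum_mono)
    fix k
    have "\<bar>Y (Suc k) \<omega>\<bar> \<le> M" using bnd by auto
    then have "\<bar>s\<bar> * \<bar>Y (Suc k) \<omega>\<bar> \<le> 1 * M" using s by (intro mult_mono) auto
    then show "\<bar>s * Y (Suc k) \<omega>\<bar> \<le> M" by (simp add: abs_mult)
  qed
  finally show ?thesis by simp
qed

lemma EU_mono: "q \<le> q' \<Longrightarrow> EU s q \<subseteq> EU s q'"
proof
  fix \<omega> assume q: "q \<le> q'" and "\<omega> \<in> EU s q"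
  then have "seq_of Y \<omega> \<in> U s q" unfolding EU_def by simp
  then have "seq_of Y \<omega> \<in> U s q'" unfolding U_def
  proof (safe)
    fix m
    assume "\<forall>m. \<exists>N. \<forall>n\<ge>N. (\<Sum>k<n. s * seq_of Y \<omega> k) \<le> real n * (q + 1 / real (Suc m))"
    then obtain N where N: "\<forall>n\<ge>N. (\<Sum>k<n. s * seq_of Y \<omega> k) \<le> real n * (q + 1 / real (Suc m))" by blast
    have "\<forall>n\<ge>N. (\<Sum>k<n. s * seq_of Y \<omega> k) \<le> real n * (q' + 1 / real (Suc m))"
    proof (intro allI impI)
      fix n assume "N \<le> n"
      then have "(\<Sum>k<n. s * seq_of Y \<omega> k) \<le> real n * (q + 1 / real (Suc m))" using N by auto
      also have "\<dots> \<le> real n * (q' + 1 / real (Suc m))" using q by (intro mult_left_mono) auto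
      finally show "(\<Sum>k<n. s * seq_of Y \<omega> k) \<le> real n * (q' + 1 / real (Suc m))" .
    qed
    then show "\<exists>N. \<forall>n\<ge>N. (\<Sum>k<n. s * seq_of Y \<omega> k) \<le> real n * (q' + 1 / real (Suc m))" by blast
  qed
  then show "\<omega> \<in> EU s q'" unfolding EU_def by simp
qed

lemma EU_top: "\<bar>s\<bar> \<le> 1 \<Longrightarrow> M \<le> q \<Longrightarrow> EU s q = UNIV"
proof -
  assume s: "\<bar>s\<bar> \<le> 1" and q: "M \<le> q"
  have "\<omega> \<in> EU s q" for \<omega>
    unfolding EU_eq
  proof (intro CollectI allI exI[of _ 0] impI)
    fix m n :: nat
    have "(\<Sum>k<n. s * Y (Suc k) \<omega>) \<le> real n * M" using S_bound[of s \<omega> n] s by linarith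
    also have "\<dots> \<le> real n * (q + 1 / real (Suc m))"
    proof (intro mult_left_mono)
      have "0 \<le> 1 / real (Suc m)" by simp
      then show "M \<le> q + 1 / real (Suc m)" using q by linarith
    qed simp
    finally show "(\<Sum>k<n. s * Y (Suc k) \<omega>) \<le> real n * (q + 1 / real (Suc m))" .
  qed
  then show ?thesis by auto
qed

lemma EU_bot: "\<bar>s\<bar> \<le> 1 \<Longrightarrow> q < - M \<Longrightarrow> EU s q = {}"
proof -
  assume s: "\<bar>s\<bar> \<le> 1" and q: "q < - M"
  have "\<omega> \<notin> EU s q" for \<omega>
  proof
    assume "\<omega> \<in> EU s q"
    then have H: "\<forall>m::nat. \<exists>N::nat. \<forall>n\<ge>N. (\<Sum>k<n. s * Y (Suc k) \<omega>) \<le> real n * (q + 1 / real (Suc m))"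
      unfolding EU_eq by simp
    have d: "0 < - M - q" using q by simp
    obtain m :: nat where m0: "inverse (real (Suc m)) < - M - q" using reals_Archimedean[OF d] by blast
    then have m: "q + 1 / real (Suc m) < - M" by (simp add: inverse_eq_divide)
    obtain N where N: "\<forall>n\<ge>N. (\<Sum>k<n. s * Y (Suc k) \<omega>) \<le> real n * (q + 1 / real (Suc m))"
      using H by blast
    define n where "n = Suc N"
    have "N \<le> n" unfolding n_def by simp
    then have "(\<Sum>k<n. s * Y (Suc k) \<omega>) \<le> real n * (q + 1 / real (Suc m))" using N by blast
    also have "\<dots> < real n * (- M)" using m n_def by (intro mult_strict_left_mono) auto
    finally show False using S_bound[of s \<omega> n] s by linarith
  qed
  then show ?thesis by auto
qed

definition "Q s = {q. V (- EU s q) = 0}"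
definition "c s = Inf (Q s)"

lemma Q_ne: "\<bar>s\<bar> \<le> 1 \<Longrightarrow> M \<in> Q s"
  unfolding Q_def using EU_top[of s M] by simp

lemma Q_lb: "\<bar>s\<bar> \<le> 1 \<Longrightarrow> q \<in> Q s \<Longrightarrow> - M \<le> q"
proof (rule ccontr)
  assume s: "\<bar>s\<bar> \<le> 1" and "q \<in> Q s" and "\<not> - M \<le> q"
  then have "EU s q = {}" "V (- EU s q) = 0" using EU_bot[OF s] unfolding Q_def by auto
  then show False by simp
qed

lemma c_above: "\<bar>s\<bar> \<le> 1 \<Longrightarrow> c s < q \<Longrightarrow> V (- EU s q) = 0"
proof -
  assume s: "\<bar>s\<bar> \<le> 1" and q: "c s < q"
  obtain x where x: "x \<in> Q s" "x < q"
    using cInf_lessD[of "Q s" q] Q_ne[OF s] q unfolding c_def by blast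
  have "- EU s q \<subseteq> - EU s x" using EU_mono[of x q s] x by auto
  then have "V (- EU s q) \<le> V (- EU s x)" using EU_F by (intro V_mono) auto
  moreover have "V (- EU s x) = 0" using x unfolding Q_def by simp
  moreover have "0 \<le> V (- EU s q)" using EU_F by (intro V_nonneg) auto
  ultimately show ?thesis by linarith
qed

lemma c_below: "\<bar>s\<bar> \<le> 1 \<Longrightarrow> q < c s \<Longrightarrow> V (EU s q) = 0"
proof -
  assume s: "\<bar>s\<bar> \<le> 1" and q: "q < c s"
  have bdd: "bdd_below (Q s)" unfolding bdd_below_def using Q_lb[OF s] by blast
  have "q \<notin> Q s"
  proof
    assume "q \<in> Q s"
    then have "c s \<le> q" unfolding c_def using cInf_lower bdd by blast
    then show False using q by simp
  qed
  then show ?thesis using EU_dich[of s q] unfolding Q_def by auto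
qed

lemma c_bounds: "\<bar>s\<bar> \<le> 1 \<Longrightarrow> - M \<le> c s \<and> c s \<le> M"
proof -
  assume s: "\<bar>s\<bar> \<le> 1"
  have bdd: "bdd_below (Q s)" unfolding bdd_below_def using Q_lb[OF s] by blast
  have "c s \<le> M" unfolding c_def using cInf_lower bdd Q_ne[OF s] by blast
  moreover have "- M \<le> c s" unfolding c_def using Q_ne[OF s] Q_lb[OF s] by (intro cInf_greatest) auto
  ultimately show ?thesis by simp
qed


definition "Abad s \<alpha> N = {z \<in> space (PiM {..N} (\<lambda>_. borel :: real measure)).
   \<forall>n\<in>{1..N}. (\<Sum>i\<in>{..<n} \<inter> {..N}. s * z i) < real n * \<alpha>}"
definition "bad s \<alpha> N j = {\<omega>. \<forall>n\<in>{1..N}. (\<Sum>i<n. s * Y (j + 1 + i) \<omega>) < real n * \<alpha>}"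

lemma Abad_sets: "Abad s \<alpha> N \<in> sets (PiM {..N} (\<lambda>_. borel))"
  unfolding Abad_def
proof (rule sets.sets_Collect_countable_Ball)
  fix n :: nat
  have "(\<lambda>z. \<Sum>i\<in>{..<n} \<inter> {..N}. s * z i) \<in> borel_measurable (PiM {..N} (\<lambda>_. borel))"
  proof (rule borel_measurable_sum)
    fix i assume "i \<in> {..<n} \<inter> {..N}"
    then have "(\<lambda>z. z i) \<in> borel_measurable (PiM {..N} (\<lambda>_. borel))"
      by (intro measurable_component_singleton) auto
    then show "(\<lambda>z. s * z i) \<in> borel_measurable (PiM {..N} (\<lambda>_. borel))" by measurable
  qed
  then show "{z \<in> space (PiM {..N} (\<lambda>_. borel :: real measure)). (\<Sum>i\<in>{..<n} \<inter> {..N}. s * z i) < real n * \<alpha>}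
     \<in> sets (PiM {..N} (\<lambda>_. borel))" by measurable
qed

lemma bad_ev: "bad s \<alpha> N j = ev j N (Abad s \<alpha> N)"
proof -
  have "(\<Sum>i\<in>{..<n} \<inter> {..N}. s * (\<lambda>i\<in>{..N}. Y (j + 1 + i) \<omega>) i) = (\<Sum>i<n. s * Y (j + 1 + i) \<omega>)"
    if "n \<in> {1..N}" for n \<omega>
  proof -
    have "{..<n} \<inter> {..N} = {..<n}" using that by auto
    then show ?thesis using that by (intro sum.cong) auto
  qed
  then show ?thesis unfolding bad_def ev_def Abad_def by (auto simp: space_PiM)
qed

lemma bad_F: "bad s \<alpha> N j \<in> F"
  unfolding bad_ev by (rule ev_F[OF Abad_sets])

lemma V_bad: "V (bad s \<alpha> N j) = V (bad s \<alpha> N 0)"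
  unfolding bad_ev by (rule V_ev[OF Abad_sets])

lemma bad_lim: "\<bar>s\<bar> \<le> 1 \<Longrightarrow> \<alpha> < c s \<Longrightarrow> (\<lambda>N. V (bad s \<alpha> N 0)) \<longlonglongrightarrow> 0"
proof -
  assume s: "\<bar>s\<bar> \<le> 1" and a: "\<alpha> < c s"
  have dec: "decseq (\<lambda>N. bad s \<alpha> N 0)"
    unfolding decseq_def bad_def by auto
  have sub: "(\<Inter>N. bad s \<alpha> N 0) \<subseteq> EU s \<alpha>"
  proof
    fix \<omega> assume w: "\<omega> \<in> (\<Inter>N. bad s \<alpha> N 0)"
    have H: "(\<Sum>i<n. s * Y (Suc i) \<omega>) < real n * \<alpha>" if "1 \<le> n" for n
    proof -
      have "\<omega> \<in> bad s \<alpha> n 0" using w by auto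
      then show ?thesis using that unfolding bad_def by auto
    qed
    show "\<omega> \<in> EU s \<alpha>" unfolding EU_eq
    proof (intro CollectI allI exI[of _ 0] impI)
      fix m n :: nat
      show "(\<Sum>k<n. s * Y (Suc k) \<omega>) \<le> real n * (\<alpha> + 1 / real (Suc m))"
      proof (cases "n = 0")
        case True then show ?thesis by simp
      next
        case False
        then have "(\<Sum>k<n. s * Y (Suc k) \<omega>) < real n * \<alpha>" using H by auto
        moreover have "real n * \<alpha> \<le> real n * (\<alpha> + 1 / real (Suc m))"
          by (intro mult_left_mono) auto
        ultimately show ?thesis by linarith
      qed
    qed
  qed
  have "V (\<Inter>N. bad s \<alpha> N 0) \<le> V (EU s \<alpha>)"
    using sub bad_F EU_F by (intro V_mono) auto
  moreover have "0 \<le> V (\<Inter>N. bad s \<alpha> N 0)" using bad_F by (intro V_nonneg F_INT) 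
  ultimately have "V (\<Inter>N. bad s \<alpha> N 0) = 0" using c_below[OF s a] by linarith
  then show ?thesis using V_dec[of "\<lambda>N. bad s \<alpha> N 0", OF bad_F dec] by simp
qed


lemma count_gen:
  fixes E :: "'i \<Rightarrow> 'a set" and w :: "'i \<Rightarrow> real"
  assumes P: "P \<in> PP" and I: "finite I" and E: "\<And>i. i \<in> I \<Longrightarrow> E i \<in> F"
  shows "D \<in> F \<Longrightarrow> (\<forall>\<omega>\<in>D. a \<le> (\<Sum>i\<in>I. w i * indicator (E i) \<omega>)) \<Longrightarrow>
     a * P D \<le> (\<Sum>i\<in>I. w i * P (E i \<inter> D))"
  using I E
proof (induction I arbitrary: a D rule: finite_induct)
  case empty
  show ?case
  proof (cases "D = {}")
    case True then show ?thesis using P_empty[OF P] by simp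
  next
    case False
    then have "a \<le> 0" using empty by auto
    moreover have "0 \<le> P D" using P_nonneg[OF P empty(1)] .
    ultimately show ?thesis by (simp add: mult_nonpos_nonneg)
  qed
next
  case (insert j I)
  define D1 where "D1 = D \<inter> E j"
  define D2 where "D2 = D - E j"
  have EjF: "E j \<in> F" using insert by auto
  have D1F: "D1 \<in> F" and D2F: "D2 \<in> F" unfolding D1_def D2_def using insert(4) EjF by auto
  have h1: "(a - w j) * P D1 \<le> (\<Sum>i\<in>I. w i * P (E i \<inter> D1))"
  proof (rule insert.IH[OF D1F])
    show "\<forall>\<omega>\<in>D1. a - w j \<le> (\<Sum>i\<in>I. w i * indicator (E i) \<omega>)"
      using insert(5) insert(1,2) unfolding D1_def by (auto simp: indicator_def)
    show "\<And>i. i \<in> I \<Longrightarrow> E i \<in> F" using insert by auto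
  qed
  have h2: "a * P D2 \<le> (\<Sum>i\<in>I. w i * P (E i \<inter> D2))"
  proof (rule insert.IH[OF D2F])
    show "\<forall>\<omega>\<in>D2. a \<le> (\<Sum>i\<in>I. w i * indicator (E i) \<omega>)"
      using insert(5) insert(1,2) unfolding D2_def by (auto simp: indicator_def)
    show "\<And>i. i \<in> I \<Longrightarrow> E i \<in> F" using insert by auto
  qed
  have add: "P (A \<inter> D) = P (A \<inter> D1) + P (A \<inter> D2)" if "A \<in> F" for A
  proof -
    have "A \<inter> D = (A \<inter> D1) \<union> (A \<inter> D2)" "(A \<inter> D1) \<inter> (A \<inter> D2) = {}"
      unfolding D1_def D2_def by auto
    then show ?thesis using P_add[OF P, of "A \<inter> D1" "A \<inter> D2"] that D1F D2F by auto
  qed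
  have PD: "P D = P D1 + P D2" using add[of UNIV] by simp
  have EF: "\<And>i. i \<in> I \<Longrightarrow> E i \<in> F" using insert by auto
  have "(\<Sum>i\<in>I. w i * P (E i \<inter> D)) = (\<Sum>i\<in>I. w i * P (E i \<inter> D1) + w i * P (E i \<inter> D2))"
    by (rule sum.cong) (auto simp: add[OF EF] algebra_simps)
  then have s12: "(\<Sum>i\<in>I. w i * P (E i \<inter> D)) = (\<Sum>i\<in>I. w i * P (E i \<inter> D1)) + (\<Sum>i\<in>I. w i * P (E i \<inter> D2))"
    by (simp add: sum.distrib)
  have "E j \<inter> D = D1" unfolding D1_def by auto
  then have "(\<Sum>i\<in>insert j I. w i * P (E i \<inter> D)) = w j * P D1 + (\<Sum>i\<in>I. w i * P (E i \<inter> D))"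
    using insert(1,2) by simp
  then show ?case using h1 h2 s12 PD by (simp add: algebra_simps)
qed

lemma count:
  fixes E :: "'i \<Rightarrow> 'a set" and w :: "'i \<Rightarrow> real"
  assumes P: "P \<in> PP" and I: "finite I" and E: "\<And>i. i \<in> I \<Longrightarrow> E i \<in> F"
    and H: "\<And>\<omega>. a \<le> (\<Sum>i\<in>I. w i * indicator (E i) \<omega>)"
  shows "a \<le> (\<Sum>i\<in>I. w i * P (E i))"
  using count_gen[OF P I E, where D=UNIV and a=a] H P_UNIV[OF P] by simp


lemma tile_pt:
  assumes s: "\<bar>s\<bar> \<le> 1"
  shows "real K * \<alpha> - (M + \<bar>\<alpha>\<bar>) * (\<Sum>j<K. indicator (bad s \<alpha> N j) \<omega>) - (M + \<bar>\<alpha>\<bar>) * real N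
     \<le> (\<Sum>k<K. s * Y (Suc k) \<omega>)"
proof -
  define z where "z k = s * Y (Suc k) \<omega> - \<alpha>" for k
  define b where "b j = (indicator (bad s \<alpha> N j) \<omega> :: real)" for j
  have "- (M + \<bar>\<alpha>\<bar>) * (\<Sum>i\<in>{0..<K}. b i) - (M + \<bar>\<alpha>\<bar>) * real N \<le> (\<Sum>k\<in>{0..<K}. z k)"
  proof (rule tiling)
    show "0 \<le> M + \<bar>\<alpha>\<bar>" using M_nonneg by simp
    fix k
    have "\<bar>Y (Suc k) \<omega>\<bar> \<le> M" using bnd by auto
    then have "\<bar>s\<bar> * \<bar>Y (Suc k) \<omega>\<bar> \<le> 1 * M" using s by (intro mult_mono) auto
    then have "\<bar>s * Y (Suc k) \<omega>\<bar> \<le> M" by (simp add: abs_mult)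
    then show "- (M + \<bar>\<alpha>\<bar>) \<le> z k" unfolding z_def by linarith
  next
    fix i show "b i = 0 \<or> b i = 1" unfolding b_def by (simp add: indicator_def)
  next
    fix i assume "b i = 0"
    then have "\<omega> \<notin> bad s \<alpha> N i" unfolding b_def by (simp add: indicator_def split: if_splits)
    then obtain n where n: "n \<in> {1..N}" "real n * \<alpha> \<le> (\<Sum>t<n. s * Y (i + 1 + t) \<omega>)"
      unfolding bad_def by (auto simp: not_less)
    have "(\<Sum>k\<in>{i..<i+n}. z k) = (\<Sum>t<n. s * Y (i + 1 + t) \<omega>) - real n * \<alpha>"
      unfolding sum_shift_ivl z_def by (simp add: sum_subtractf)
    then have "0 \<le> (\<Sum>k\<in>{i..<i+n}. z k)" using n(2) by linarith
    then show "\<exists>n\<in>{1..N}. 0 \<le> (\<Sum>k\<in>{i..<i+n}. z k)" using n(1) by blast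
  qed
  moreover have "(\<Sum>k\<in>{0..<K}. z k) = (\<Sum>k<K. s * Y (Suc k) \<omega>) - real K * \<alpha>"
    unfolding z_def by (simp add: sum_subtractf atLeast0LessThan)
  ultimately show ?thesis unfolding b_def by (simp add: atLeast0LessThan algebra_simps)
qed

lemma P_bad_sum: "P \<in> PP \<Longrightarrow> (\<Sum>j<K. P (bad s \<alpha> N j)) \<le> real K * V (bad s \<alpha> N 0)"
proof -
  assume P: "P \<in> PP"
  have "(\<Sum>j<K. P (bad s \<alpha> N j)) \<le> (\<Sum>j<K. V (bad s \<alpha> N 0))"
    using P_le_V[OF P bad_F] V_bad by (intro sum_mono) metis
  then show ?thesis by simp
qed

lemma lim_aux:
  fixes a b d :: real
  assumes "\<And>K::nat. K \<ge> 1 \<Longrightarrow> a - b / real K \<le> d"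
  shows "a \<le> d"
proof -
  have "(\<lambda>K::nat. a - b / real K) \<longlonglongrightarrow> a - 0"
    by (intro tendsto_diff tendsto_const tendsto_divide_0[OF tendsto_const] filterlim_at_top_imp_at_infinity[OF filterlim_real_sequentially])
  then show ?thesis using assms by (intro LIMSEQ_le_const2[of "\<lambda>K::nat. a - b / real K"]) auto
qed


lemma count2:
  fixes E :: "'i \<Rightarrow> 'a set" and w :: "'i \<Rightarrow> real" and G :: "'j \<Rightarrow> 'a set" and u :: "'j \<Rightarrow> real"
  assumes P: "P \<in> PP" and I: "finite I" and J: "finite J"
    and E: "\<And>i. i \<in> I \<Longrightarrow> E i \<in> F" and G: "\<And>j. j \<in> J \<Longrightarrow> G j \<in> F"
    and H: "\<And>\<omega>. a \<le> (\<Sum>i\<in>I. w i * indicator (E i) \<omega>) + (\<Sum>j\<in>J. u j * indicator (G j) \<omega>)"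
  shows "a \<le> (\<Sum>i\<in>I. w i * P (E i)) + (\<Sum>j\<in>J. u j * P (G j))"
proof -
  have plus: "\<And>f :: 'i + 'j \<Rightarrow> real. (\<Sum>x\<in>I <+> J. f x) = (\<Sum>i\<in>I. f (Inl i)) + (\<Sum>j\<in>J. f (Inr j))"
    using sum.Plus[OF I J] by (simp add: comp_def)
  have "a \<le> (\<Sum>x\<in>I <+> J. case_sum w u x * P (case_sum E G x))"
  proof (rule count[OF P])
    show "finite (I <+> J)" using I J by simp
    show "\<And>x. x \<in> I <+> J \<Longrightarrow> case_sum E G x \<in> F" using E G by auto
    fix \<omega>
    show "a \<le> (\<Sum>x\<in>I <+> J. case_sum w u x * indicator (case_sum E G x) \<omega>)"
      unfolding plus sum.case by (rule H)
  qed
  then show ?thesis unfolding plus sum.case .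
qed

lemma c_sum: "c 1 + c (-1) \<le> 0"
proof (rule field_le_epsilon)
  fix e :: real assume e: "0 < e"
  define \<alpha>1 where "\<alpha>1 = c 1 - e/2"
  define \<alpha>2 where "\<alpha>2 = c (-1) - e/2"
  define C1 where "C1 = M + \<bar>\<alpha>1\<bar>"
  define C2 where "C2 = M + \<bar>\<alpha>2\<bar>"
  obtain P where P: "P \<in> PP" using exP .
  have C1: "0 \<le> C1" and C2: "0 \<le> C2" using M_nonneg unfolding C1_def C2_def by auto
  have step: "\<alpha>1 + \<alpha>2 - (C1 + C2) * real N / real K \<le> C1 * V (bad 1 \<alpha>1 N 0) + C2 * V (bad (-1) \<alpha>2 N 0)"
    if K: "K \<ge> 1" for N K
  proof -
    have pw: "real K * (\<alpha>1 + \<alpha>2) - (C1 + C2) * real N \<le>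
       (\<Sum>j<K. C1 * indicator (bad 1 \<alpha>1 N j) \<omega>) + (\<Sum>j<K. C2 * indicator (bad (-1) \<alpha>2 N j) \<omega>)" for \<omega>
    proof -
      have t1: "real K * \<alpha>1 - C1 * (\<Sum>j<K. indicator (bad 1 \<alpha>1 N j) \<omega>) - C1 * real N \<le> (\<Sum>k<K. 1 * Y (Suc k) \<omega>)"
        unfolding C1_def by (rule tile_pt) simp
      have t2: "real K * \<alpha>2 - C2 * (\<Sum>j<K. indicator (bad (-1) \<alpha>2 N j) \<omega>) - C2 * real N \<le> (\<Sum>k<K. (-1) * Y (Suc k) \<omega>)"
        unfolding C2_def by (rule tile_pt) simp
      have "(\<Sum>k<K. (-1) * Y (Suc k) \<omega>) = - (\<Sum>k<K. 1 * Y (Suc k) \<omega>)" by (simp add: sum_negf)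
      then show ?thesis using t1 t2 by (simp add: sum_distrib_left[symmetric] algebra_simps)
    qed
    have "real K * (\<alpha>1 + \<alpha>2) - (C1 + C2) * real N \<le>
       (\<Sum>j<K. C1 * P (bad 1 \<alpha>1 N j)) + (\<Sum>j<K. C2 * P (bad (-1) \<alpha>2 N j))"
      by (rule count2[OF P _ _ bad_F bad_F pw]) auto
    also have "\<dots> = C1 * (\<Sum>j<K. P (bad 1 \<alpha>1 N j)) + C2 * (\<Sum>j<K. P (bad (-1) \<alpha>2 N j))"
      by (simp add: sum_distrib_left)
    also have "\<dots> \<le> C1 * (real K * V (bad 1 \<alpha>1 N 0)) + C2 * (real K * V (bad (-1) \<alpha>2 N 0))"
      using P_bad_sum[OF P] C1 C2 by (intro add_mono mult_left_mono) auto
    finally have "real K * (\<alpha>1 + \<alpha>2) - (C1 + C2) * real N \<le> real K * (C1 * V (bad 1 \<alpha>1 N 0) + C2 * V (bad (-1) \<alpha>2 N 0))"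
      by (simp add: algebra_simps)
    then show ?thesis using K by (simp add: field_simps)
  qed
  have lim1: "\<alpha>1 + \<alpha>2 \<le> C1 * V (bad 1 \<alpha>1 N 0) + C2 * V (bad (-1) \<alpha>2 N 0)" for N
    by (rule lim_aux[of _ "(C1 + C2) * real N"]) (rule step)
  have "(\<lambda>N. C1 * V (bad 1 \<alpha>1 N 0) + C2 * V (bad (-1) \<alpha>2 N 0)) \<longlonglongrightarrow> C1 * 0 + C2 * 0"
    using bad_lim[of 1 \<alpha>1] bad_lim[of "-1" \<alpha>2] e unfolding \<alpha>1_def \<alpha>2_def
    by (intro tendsto_add tendsto_mult tendsto_const) auto
  then have "\<alpha>1 + \<alpha>2 \<le> 0" using lim1 by (intro LIMSEQ_le_const) auto
  then show "c 1 + c (-1) \<le> 0 + e" unfolding \<alpha>1_def \<alpha>2_def by simp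
qed


lemma EU_iff: "\<omega> \<in> EU s q \<longleftrightarrow> (\<forall>\<delta>>0. eventually (\<lambda>n. (\<Sum>k<n. s * Y (Suc k) \<omega>) \<le> real n * (q + \<delta>)) sequentially)"
  unfolding EU_def using U_iff[of "seq_of Y \<omega>" s q] by (simp add: seq_of_def)

lemma EU_inter: "(\<Inter>j. EU s (q + 1 / real (Suc j))) \<subseteq> EU s q"
proof
  fix \<omega> assume w: "\<omega> \<in> (\<Inter>j. EU s (q + 1 / real (Suc j)))"
  show "\<omega> \<in> EU s q" unfolding EU_iff
  proof (intro allI impI)
    fix \<delta> :: real assume d: "0 < \<delta>"
    then have d2: "0 < \<delta>/2" by simp
    obtain j :: nat where j0: "inverse (real (Suc j)) < \<delta>/2" using reals_Archimedean[OF d2] by blast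
    then have j: "1 / real (Suc j) < \<delta>/2" by (simp add: inverse_eq_divide)
    have "\<omega> \<in> EU s (q + 1 / real (Suc j))" using w by auto
    then have "eventually (\<lambda>n. (\<Sum>k<n. s * Y (Suc k) \<omega>) \<le> real n * (q + 1 / real (Suc j) + \<delta>/2)) sequentially"
      unfolding EU_iff using d2 by blast
    then show "eventually (\<lambda>n. (\<Sum>k<n. s * Y (Suc k) \<omega>) \<le> real n * (q + \<delta>)) sequentially"
    proof eventually_elim
      case (elim n)
      have "real n * (q + 1 / real (Suc j) + \<delta>/2) \<le> real n * (q + \<delta>)"
        using j by (intro mult_left_mono) auto
      then show ?case using elim by linarith
    qed
  qed
qed

lemma c_above': "\<bar>s\<bar> \<le> 1 \<Longrightarrow> c s \<le> q \<Longrightarrow> V (- EU s q) = 0"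
proof -
  assume s: "\<bar>s\<bar> \<le> 1" and q: "c s \<le> q"
  have "- EU s q \<subseteq> (\<Union>j. - EU s (q + 1 / real (Suc j)))" using EU_inter[of s q] by auto
  moreover have "V (\<Union>j. - EU s (q + 1 / real (Suc j))) = 0"
  proof (rule V_null_UN)
    fix j :: nat
    show "- EU s (q + 1 / real (Suc j)) \<in> F" using EU_F by auto
    have "0 < 1 / real (Suc j)" by simp
    then show "V (- EU s (q + 1 / real (Suc j))) = 0" using q by (intro c_above[OF s]) linarith
  qed
  ultimately have "V (- EU s q) \<le> 0"
    using EU_F by (metis F_UN F_compl V_mono)
  moreover have "0 \<le> V (- EU s q)" using EU_F by (intro V_nonneg) auto
  ultimately show ?thesis by linarith
qed

lemma c_ge: "0 \<le> c 1 + c (-1)"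
proof (rule ccontr)
  assume "\<not> 0 \<le> c 1 + c (-1)"
  then have lt: "c 1 < - c (-1)" by simp
  define q1 where "q1 = c 1 + (- c (-1) - c 1) / 3"
  define q2 where "q2 = c 1 + 2 * (- c (-1) - c 1) / 3"
  have q12: "c 1 < q1" "q1 < q2" "q2 < - c (-1)" using lt unfolding q1_def q2_def by (auto simp: field_simps)
  have n1: "V (- EU 1 q1) = 0" using c_above[of 1 q1] q12 by simp
  have n2: "V (- EU (-1) (- q2)) = 0" using c_above[of "-1" "- q2"] q12 by simp
  have "EU 1 q1 \<inter> EU (-1) (- q2) = {}"
  proof (rule ccontr)
    assume "EU 1 q1 \<inter> EU (-1) (- q2) \<noteq> {}"
    then obtain \<omega> where w: "\<omega> \<in> EU 1 q1" "\<omega> \<in> EU (-1) (- q2)" by blast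
    define \<delta> where "\<delta> = (q2 - q1) / 3"
    have d: "0 < \<delta>" using q12 unfolding \<delta>_def by simp
    have e1: "eventually (\<lambda>n. (\<Sum>k<n. 1 * Y (Suc k) \<omega>) \<le> real n * (q1 + \<delta>)) sequentially"
      using w(1) d unfolding EU_iff by blast
    have e2: "eventually (\<lambda>n. (\<Sum>k<n. (-1) * Y (Suc k) \<omega>) \<le> real n * (- q2 + \<delta>)) sequentially"
      using w(2) d unfolding EU_iff by blast
    have "eventually (\<lambda>n::nat. False) sequentially"
      using e1 e2 eventually_gt_at_top[of "0::nat"]
    proof eventually_elim
      case (elim n)
      have "(\<Sum>k<n. (-1) * Y (Suc k) \<omega>) = - (\<Sum>k<n. 1 * Y (Suc k) \<omega>)" by (simp add: sum_negf)
      then have "real n * (q2 - \<delta>) \<le> real n * (q1 + \<delta>)" using elim(1,2) by (simp add: algebra_simps)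
      moreover have "real n * (q1 + \<delta>) < real n * (q2 - \<delta>)"
        using elim(3) q12 unfolding \<delta>_def by (intro mult_strict_left_mono) (auto simp: field_simps)
      ultimately show False by simp
    qed
    then show False by simp
  qed
  then have "UNIV = - EU 1 q1 \<union> - EU (-1) (- q2)" by auto
  then have "V UNIV \<le> V (- EU 1 q1) + V (- EU (-1) (- q2))"
    using V_Un_le EU_F F_compl by metis
  then show False using n1 n2 by simp
qed


definition "cc = c 1"

definition "Econv = {\<omega>. (\<lambda>n. (\<Sum>k=1..n. Y k \<omega>) / real n) \<longlonglongrightarrow> cc}"

lemma Econv_eq: "Econv = EU 1 cc \<inter> EU (-1) (- cc)"
proof -
  have "\<omega> \<in> Econv \<longleftrightarrow> \<omega> \<in> EU 1 cc \<inter> EU (-1) (- cc)" for \<omega>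
  proof -
    have s1: "(\<Sum>k=1..n. Y k \<omega>) = (\<Sum>k<n. Y (Suc k) \<omega>)" for n
      using sum.atLeast1_atMost_eq[of "\<lambda>k. Y k \<omega>" n] by simp
    have "\<omega> \<in> Econv \<longleftrightarrow> (\<lambda>n. (\<Sum>k<n. Y (Suc k) \<omega>) / real n) \<longlonglongrightarrow> cc"
      by (simp only: Econv_def mem_Collect_eq s1)
    also have "\<dots> \<longleftrightarrow> \<omega> \<in> EU 1 cc \<and> \<omega> \<in> EU (-1) (- cc)"
      unfolding conv_iff EU_iff by (simp add: sum_negf)
    finally show ?thesis by simp
  qed
  then show ?thesis by blast
qed

lemma Econv_F: "Econv \<in> F" unfolding Econv_eq using EU_F by auto

lemma c_neg: "c (-1) = - cc" unfolding cc_def using c_sum c_ge by simp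

lemma part1: "v Econv = 1"
proof -
  have "V (- EU 1 cc) = 0" using c_above'[of 1 cc] unfolding cc_def by simp
  moreover have "V (- EU (-1) (- cc)) = 0" using c_above'[of "-1" "- cc"] c_neg by simp
  moreover have "- Econv = - EU 1 cc \<union> - EU (-1) (- cc)" unfolding Econv_eq by auto
  ultimately have "V (- Econv) \<le> 0" using V_Un_le EU_F F_compl by (metis add.right_neutral)
  moreover have "0 \<le> V (- Econv)" using Econv_F by (intro V_nonneg) auto
  ultimately show ?thesis using v_eq[OF Econv_F] by simp
qed


lemma ergo_bound:
  fixes L :: "'l set" and u \<beta> :: "'l \<Rightarrow> real" and G :: "nat \<Rightarrow> 'l \<Rightarrow> 'a set" and b :: real
  assumes s: "\<bar>s\<bar> \<le> 1" and \<alpha>: "\<alpha> < c s" and L: "finite L"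
    and GF: "\<And>k l. G k l \<in> F"
    and Pb: "\<And>P k l. P \<in> PP \<Longrightarrow> l \<in> L \<Longrightarrow> u l * P (G k l) \<le> \<beta> l"
    and pw: "\<And>\<omega> k. s * Y (Suc k) \<omega> \<le> b + (\<Sum>l\<in>L. u l * indicator (G k l) \<omega>)"
  shows "\<alpha> \<le> b + (\<Sum>l\<in>L. \<beta> l)"
proof -
  obtain P where P: "P \<in> PP" using exP .
  define C where "C = M + \<bar>\<alpha>\<bar>"
  have C: "0 \<le> C" using M_nonneg unfolding C_def by simp
  have step: "\<alpha> - b - C * real N / real K \<le> C * V (bad s \<alpha> N 0) + (\<Sum>l\<in>L. \<beta> l)"
    if K: "K \<ge> 1" for N K
  proof -
    have pw2: "real K * (\<alpha> - b) - C * real N \<le>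
       (\<Sum>j<K. C * indicator (bad s \<alpha> N j) \<omega>) + (\<Sum>p\<in>{..<K} \<times> L. u (snd p) * indicator (G (fst p) (snd p)) \<omega>)" for \<omega>
    proof -
      have t: "real K * \<alpha> - C * (\<Sum>j<K. indicator (bad s \<alpha> N j) \<omega>) - C * real N \<le> (\<Sum>k<K. s * Y (Suc k) \<omega>)"
        unfolding C_def by (rule tile_pt[OF s])
      have "(\<Sum>k<K. s * Y (Suc k) \<omega>) \<le> (\<Sum>k<K. b + (\<Sum>l\<in>L. u l * indicator (G k l) \<omega>))"
        by (rule sum_mono) (rule pw)
      also have "\<dots> = real K * b + (\<Sum>k<K. \<Sum>l\<in>L. u l * indicator (G k l) \<omega>)"
        by (simp add: sum.distrib)
      also have "(\<Sum>k<K. \<Sum>l\<in>L. u l * indicator (G k l) \<omega>) = (\<Sum>p\<in>{..<K} \<times> L. u (snd p) * indicator (G (fst p) (snd p)) \<omega>)"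
        by (subst sum.cartesian_product) (simp add: case_prod_beta)
      finally show ?thesis using t by (simp add: sum_distrib_left algebra_simps)
    qed
    have "real K * (\<alpha> - b) - C * real N \<le>
       (\<Sum>j<K. C * P (bad s \<alpha> N j)) + (\<Sum>p\<in>{..<K} \<times> L. u (snd p) * P (G (fst p) (snd p)))"
      by (rule count2[OF P _ _ bad_F GF pw2]) (use L in auto)
    also have "(\<Sum>j<K. C * P (bad s \<alpha> N j)) \<le> C * (real K * V (bad s \<alpha> N 0))"
      using P_bad_sum[OF P] C by (simp add: sum_distrib_left[symmetric] mult_left_mono)
    also have "(\<Sum>p\<in>{..<K} \<times> L. u (snd p) * P (G (fst p) (snd p))) \<le> (\<Sum>p\<in>{..<K} \<times> L. \<beta> (snd p))"
      using Pb[OF P] by (intro sum_mono) auto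
    also have "(\<Sum>p\<in>{..<K} \<times> L. \<beta> (snd p)) = real K * (\<Sum>l\<in>L. \<beta> l)"
    proof -
      have "(\<Sum>p\<in>{..<K} \<times> L. \<beta> (snd p)) = (\<Sum>k<K. \<Sum>l\<in>L. \<beta> l)"
        by (subst sum.cartesian_product) (simp add: case_prod_beta)
      then show ?thesis by simp
    qed
    finally have "real K * (\<alpha> - b) - C * real N \<le> real K * (C * V (bad s \<alpha> N 0) + (\<Sum>l\<in>L. \<beta> l))"
      by (simp add: algebra_simps)
    then show ?thesis using K by (simp add: field_simps)
  qed
  have lim1: "\<alpha> - b \<le> C * V (bad s \<alpha> N 0) + (\<Sum>l\<in>L. \<beta> l)" for N
    by (rule lim_aux[of _ "C * real N"]) (rule step)
  have "(\<lambda>N. C * V (bad s \<alpha> N 0) + (\<Sum>l\<in>L. \<beta> l)) \<longlonglongrightarrow> C * 0 + (\<Sum>l\<in>L. \<beta> l)"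
    using bad_lim[OF s \<alpha>] by (intro tendsto_add tendsto_mult tendsto_const) auto
  then have "\<alpha> - b \<le> C * 0 + (\<Sum>l\<in>L. \<beta> l)" using lim1 by (intro LIMSEQ_le_const) auto
  then show ?thesis by simp
qed


definition "Gt k t = {\<omega>. t \<le> Y (Suc k) \<omega>}"

lemma Gt_ev: "Gt k t = ev k 0 {z \<in> space (PiM {..0} (\<lambda>_. borel :: real measure)). t \<le> z 0}"
  unfolding Gt_def ev_def by (auto simp: space_PiM)

lemma Gt_ev': "- Gt k t = ev k 0 {z \<in> space (PiM {..0} (\<lambda>_. borel :: real measure)). z 0 < t}"
  unfolding Gt_def ev_def by (auto simp: space_PiM)

lemma A0_sets: "{z \<in> space (PiM {..0::nat} (\<lambda>_. borel :: real measure)). t \<le> z 0} \<in> sets (PiM {..0} (\<lambda>_. borel))"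
  "{z \<in> space (PiM {..0::nat} (\<lambda>_. borel :: real measure)). z 0 < t} \<in> sets (PiM {..0} (\<lambda>_. borel))"
proof -
  have "(\<lambda>z. z 0) \<in> borel_measurable (PiM {..0::nat} (\<lambda>_. borel :: real measure))"
    by (rule measurable_component_singleton) simp
  then show "{z \<in> space (PiM {..0::nat} (\<lambda>_. borel :: real measure)). t \<le> z 0} \<in> sets (PiM {..0} (\<lambda>_. borel))"
    "{z \<in> space (PiM {..0::nat} (\<lambda>_. borel :: real measure)). z 0 < t} \<in> sets (PiM {..0} (\<lambda>_. borel))"
    by measurable
qed

lemma Gt_F: "Gt k t \<in> F" unfolding Gt_ev by (rule ev_F[OF A0_sets(1)])

lemma V_Gt: "V (Gt k t) = V (Gt 0 t)" unfolding Gt_ev by (rule V_ev[OF A0_sets(1)])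

lemma v_Gt: "v (Gt k t) = v (Gt 0 t)"
proof -
  have "V (- Gt k t) = V (- Gt 0 t)" unfolding Gt_ev' by (rule V_ev[OF A0_sets(2)])
  then show ?thesis using v_eq[OF Gt_F] by simp
qed

lemma Gt0: "Gt 0 t = {\<omega>. Y 1 \<omega> \<ge> t}" unfolding Gt_def by simp

lemma Ybnd: "- M \<le> Y (Suc k) \<omega> \<and> Y (Suc k) \<omega> \<le> M"
proof -
  have "\<bar>Y (Suc k) \<omega>\<bar> \<le> M" using bnd by auto
  then show ?thesis by (simp add: abs_le_iff)
qed

lemma fV_props:
  shows "\<And>x y. x \<le> y \<Longrightarrow> V (Gt 0 y) \<le> V (Gt 0 x)"
    and "\<And>t. 0 \<le> V (Gt 0 t) \<and> V (Gt 0 t) \<le> 1"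
    and "\<And>t. t \<le> - M \<Longrightarrow> V (Gt 0 t) = 1"
    and "\<And>t. M < t \<Longrightarrow> V (Gt 0 t) = 0"
proof -
  show "\<And>x y. x \<le> y \<Longrightarrow> V (Gt 0 y) \<le> V (Gt 0 x)"
    using Gt_F by (intro V_mono) (auto simp: Gt_def)
  show "\<And>t. 0 \<le> V (Gt 0 t) \<and> V (Gt 0 t) \<le> 1" using Gt_F V_nonneg V_le1 by auto
  fix t
  show "t \<le> - M \<Longrightarrow> V (Gt 0 t) = 1"
  proof -
    assume "t \<le> - M" then have "Gt 0 t = UNIV" using Ybnd unfolding Gt_def by (auto intro: order_trans)
    then show ?thesis by simp
  qed
  show "M < t \<Longrightarrow> V (Gt 0 t) = 0"
  proof -
    assume "M < t" then have "Gt 0 t = {}" using Ybnd unfolding Gt_def by (auto simp: not_le intro: le_less_trans)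
    then show ?thesis by simp
  qed
qed

lemma fv_props:
  shows "\<And>x y. x \<le> y \<Longrightarrow> v (Gt 0 y) \<le> v (Gt 0 x)"
    and "\<And>t. 0 \<le> v (Gt 0 t) \<and> v (Gt 0 t) \<le> 1"
    and "\<And>t. t \<le> - M \<Longrightarrow> v (Gt 0 t) = 1"
    and "\<And>t. M < t \<Longrightarrow> v (Gt 0 t) = 0"
proof -
  have ve: "v (Gt 0 t) = 1 - V (- Gt 0 t)" for t using v_eq[OF Gt_F] .
  show "\<And>x y. x \<le> y \<Longrightarrow> v (Gt 0 y) \<le> v (Gt 0 x)"
  proof -
    fix x y :: real assume "x \<le> y"
    then have "V (- Gt 0 x) \<le> V (- Gt 0 y)" using Gt_F by (intro V_mono) (auto simp: Gt_def)
    then show "v (Gt 0 y) \<le> v (Gt 0 x)" using ve by simp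
  qed
  show "\<And>t. 0 \<le> v (Gt 0 t) \<and> v (Gt 0 t) \<le> 1" using Gt_F V_nonneg V_le1 ve by (simp add: F_compl)
  fix t
  show "t \<le> - M \<Longrightarrow> v (Gt 0 t) = 1"
  proof -
    assume "t \<le> - M" then have "Gt 0 t = UNIV" using Ybnd unfolding Gt_def by (auto intro: order_trans)
    then show ?thesis using ve[of t] by simp
  qed
  show "M < t \<Longrightarrow> v (Gt 0 t) = 0"
  proof -
    assume "M < t" then have "Gt 0 t = {}" using Ybnd unfolding Gt_def by (auto simp: not_le intro: le_less_trans)
    then show ?thesis using ve[of t] by simp
  qed
qed

lemma choquet_V: "choquet V (Y 1) = integral {-M..M} (\<lambda>t. V (Gt 0 t)) - M"
  unfolding choquet_def Gt0[symmetric] using Mpos fV_props by (intro choquet_conv) auto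

lemma choquet_v: "choquet v (Y 1) = integral {-M..M} (\<lambda>t. v (Gt 0 t)) - M"
  unfolding choquet_def Gt0[symmetric] using Mpos fv_props by (intro choquet_conv) auto


lemma part2_up: "cc \<le> choquet V (Y 1)"
proof (rule lim_aux[of _ "2 * M"])
  fix m :: nat assume m: "1 \<le> m"
  define h where "h = 2 * M / real m"
  have h: "0 < h" unfolding h_def using Mpos m by simp
  have hm: "- M + real m * h = M" unfolding h_def using m by simp
  define t where "t i = - M + real i * h" for i :: nat
  have key: "cc \<le> - M + h + (\<Sum>i\<in>{1..m}. h * V (Gt 0 (t i)))"
  proof (rule field_le_epsilon)
    fix e :: real assume e: "0 < e"
    have "cc - e \<le> (- M + h) + (\<Sum>i\<in>{1..m}. h * V (Gt 0 (t i)))"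
    proof (rule ergo_bound[where s=1 and G="\<lambda>k i. Gt k (t i)" and u="\<lambda>_. h"])
      show "\<bar>1::real\<bar> \<le> 1" by simp
      show "cc - e < c 1" using e unfolding cc_def by simp
      show "finite {1..m}" by simp
      show "\<And>k l. Gt k (t l) \<in> F" by (rule Gt_F)
      show "h * P (Gt k (t l)) \<le> h * V (Gt 0 (t l))" if "P \<in> PP" for P k l
      proof -
        have "P (Gt k (t l)) \<le> V (Gt 0 (t l))" using P_le_V[OF that Gt_F, of k "t l"] V_Gt[of k "t l"] by simp
        then show ?thesis using h by simp
      qed
      fix \<omega> k
      have y: "- M \<le> Y (Suc k) \<omega>" "Y (Suc k) \<omega> \<le> - M + real m * h"
        using Ybnd[of k \<omega>] unfolding hm by auto
      have "Y (Suc k) \<omega> \<le> - M + h + h * (\<Sum>i\<in>{1..m}. if - M + real i * h \<le> Y (Suc k) \<omega> then 1 else 0)"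
        by (rule grid_up[OF h y])
      also have "h * (\<Sum>i\<in>{1..m}. if - M + real i * h \<le> Y (Suc k) \<omega> then 1 else 0) =
          (\<Sum>i\<in>{1..m}. h * indicator (Gt k (t i)) \<omega>)"
        unfolding sum_distrib_left t_def Gt_def by (intro sum.cong) (auto simp: indicator_def)
      finally show "1 * Y (Suc k) \<omega> \<le> - M + h + (\<Sum>i\<in>{1..m}. h * indicator (Gt k (t i)) \<omega>)" by simp
    qed
    then show "cc \<le> - M + h + (\<Sum>i\<in>{1..m}. h * V (Gt 0 (t i))) + e" by simp
  qed
  have "h * (\<Sum>i\<in>{1..m}. V (Gt 0 (- M + real i * h))) \<le> integral {- M..- M + real m * h} (\<lambda>t. V (Gt 0 t))"
    using riemann[OF fV_props(1) h, where m=m and a="- M"] by (rule conjunct1)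
  then have "(\<Sum>i\<in>{1..m}. h * V (Gt 0 (t i))) \<le> integral {- M..M} (\<lambda>t. V (Gt 0 t))"
    unfolding hm t_def by (simp add: sum_distrib_left)
  then have "cc \<le> h + choquet V (Y 1)" using key choquet_V by simp
  then show "cc - 2 * M / real m \<le> choquet V (Y 1)" unfolding h_def by simp
qed

lemma part2_lo: "choquet v (Y 1) \<le> cc"
proof (rule lim_aux[of _ "2 * M"])
  fix m :: nat assume m: "1 \<le> m"
  define h where "h = 2 * M / real m"
  have h: "0 < h" unfolding h_def using Mpos m by simp
  have hm: "- M + real m * h = M" unfolding h_def using m by simp
  define t where "t i = - M + real i * h" for i :: nat
  have key: "- cc \<le> M + h + (\<Sum>i<m. - h * v (Gt 0 (t i)))"
  proof (rule field_le_epsilon)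
    fix e :: real assume e: "0 < e"
    have "- cc - e \<le> (M + h) + (\<Sum>i<m. - h * v (Gt 0 (t i)))"
    proof (rule ergo_bound[where s="-1" and G="\<lambda>k i. Gt k (t i)" and u="\<lambda>_. - h"])
      show "\<bar>-1::real\<bar> \<le> 1" by simp
      show "- cc - e < c (-1)" using e c_neg by simp
      show "finite {..<m}" by simp
      show "\<And>k l. Gt k (t l) \<in> F" by (rule Gt_F)
      show "- h * P (Gt k (t l)) \<le> - h * v (Gt 0 (t l))" if "P \<in> PP" for P k l
        using v_le_P[OF that Gt_F, of k "t l"] v_Gt[of k "t l"] h by simp
      fix \<omega> k
      have y: "- M \<le> Y (Suc k) \<omega>" using Ybnd[of k \<omega>] by auto
      have "- M + h * (\<Sum>i<m. if - M + real i * h \<le> Y (Suc k) \<omega> then 1 else 0) \<le> Y (Suc k) \<omega> + h"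
        by (rule grid_lo[OF h y])
      moreover have "h * (\<Sum>i<m. if - M + real i * h \<le> Y (Suc k) \<omega> then 1 else 0) =
          - (\<Sum>i<m. - h * indicator (Gt k (t i)) \<omega>)"
        unfolding sum_distrib_left t_def Gt_def sum_negf[symmetric] by (intro sum.cong) (auto simp: indicator_def)
      ultimately show "(-1) * Y (Suc k) \<omega> \<le> M + h + (\<Sum>i<m. - h * indicator (Gt k (t i)) \<omega>)" by simp
    qed
    then show "- cc \<le> M + h + (\<Sum>i<m. - h * v (Gt 0 (t i))) + e" by simp
  qed
  have "integral {- M..- M + real m * h} (\<lambda>t. v (Gt 0 t)) \<le> h * (\<Sum>i<m. v (Gt 0 (- M + real i * h)))"
    using riemann[OF fv_props(1) h, where m=m and a="- M"] by (rule conjunct2)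
  then have "integral {- M..M} (\<lambda>t. v (Gt 0 t)) \<le> (\<Sum>i<m. h * v (Gt 0 (t i)))"
    unfolding hm t_def by (simp add: sum_distrib_left)
  moreover have "(\<Sum>i<m. - h * v (Gt 0 (t i))) = - (\<Sum>i<m. h * v (Gt 0 (t i)))" by (simp add: sum_negf)
  ultimately have "choquet v (Y 1) \<le> cc + h" using key choquet_v by simp
  then show "choquet v (Y 1) - 2 * M / real m \<le> cc" unfolding h_def by simp
qed

end

theorem theorem8:
  fixes F :: "'a set set" and \<P> :: "('a set \<Rightarrow> real) set" and Y :: "nat \<Rightarrow> 'a \<Rightarrow> real"
  assumes "sigma_algebra UNIV F"
    and "\<P> \<noteq> {}"
    and "\<forall>P\<in>\<P>. fa_prob F P"
    and "continuous_cap F (upper_prob \<P>)"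
    and "continuous_cap F (lower_prob \<P>)"
    and "\<forall>n\<ge>1. random_var F (Y n)"
    and "\<exists>M. \<forall>n\<ge>1. \<forall>\<omega>. \<bar>Y n \<omega>\<bar> \<le> M"
    and "stationary (upper_prob \<P>) Y"
    and "ergodic (upper_prob \<P>) Y"
  shows "\<exists>c::real.
     lower_prob \<P> {\<omega>. (\<lambda>n. (\<Sum>k=1..n. Y k \<omega>) / real n) \<longlonglongrightarrow> c} = 1 \<and>
     (concave_cap F (upper_prob \<P>) \<longrightarrow>
        choquet (lower_prob \<P>) (Y 1) \<le> c \<and> c \<le> choquet (upper_prob \<P>) (Y 1))"
proof -
  obtain M where bM: "\<forall>n\<ge>1. \<forall>\<omega>. \<bar>Y n \<omega>\<bar> \<le> M" using assms(7) by blast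
  have M0: "0 \<le> M" using bM by (meson abs_ge_zero order_trans order_refl)
  have bM1: "\<forall>n\<ge>1. \<forall>\<omega>. \<bar>Y n \<omega>\<bar> \<le> M + 1" using bM by (meson add_increasing2 zero_le_one)
  interpret S: setting F \<P> Y "M + 1"
    by (rule setting.intro) (use assms bM1 M0 in auto)
  show ?thesis
  proof (intro exI conjI impI)
    show "lower_prob \<P> {\<omega>. (\<lambda>n. (\<Sum>k=1..n. Y k \<omega>) / real n) \<longlonglongrightarrow> S.cc} = 1"
      using S.part1 unfolding S.Econv_def .
    show "choquet (lower_prob \<P>) (Y 1) \<le> S.cc" by (rule S.part2_lo)
    show "S.cc \<le> choquet (upper_prob \<P>) (Y 1)" by (rule S.part2_up)
  qed
qed

end
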